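(* For $n\ge3$, $\mathfrak a_{13}(n)$ equals the real span of $\{iP\}$ over all length-$n$ Pauli strings $P\notin\{I^{\otimes n},X^{\otimes n}\}$ that commute with $X^{\otimes n}$. Consequently $\mathfrak a_{13}(n)\cong\mathfrak{su}(2^{n-1})\oplus\mathfrak{su}(2^{n-1})$.
   Context: Pauli matrices $I,X,Y,Z$; $A_jB_{j+1}$ denotes the length-$n$ Pauli string with $A$ at position $j$, $B$ at $j+1$, $I$ elsewhere. $\mathfrak{su}(N)$ is the Lie algebra of traceless skew-Hermitian matrices; $\oplus$ denotes a direct sum of commuting subalgebras. For a set $S$ of Pauli strings, $\mathrm{Lie}\langle S\rangle$ is the smallest real Lie subalgebra of $\mathfrak u(2^n)$ containing $\{iP:P\in S\}$. $\mathfrak a_{13}(n)=\mathrm{Lie}\langle X_jX_{j+1},Y_jY_{j+1},Y_jZ_{j+1}:1\le j\le n-1\rangle$. *)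

theory Defs
  imports Complex_Main "Jordan_Normal_Form.Matrix"
begin

datatype pauli = PI | PX | PY | PZ

fun pauli_entry :: "pauli \<Rightarrow> nat \<Rightarrow> nat \<Rightarrow> complex" where
  "pauli_entry PI a b = (if a = b then 1 else 0)"
| "pauli_entry PX a b = (if a \<noteq> b then 1 else 0)"
| "pauli_entry PY a b = (if a = b then 0 else if a = 0 then - \<i> else \<i>)"
| "pauli_entry PZ a b = (if a = b then (if a = 0 then 1 else -1) else 0)"

text \<open>Bit of index r belonging to tensor factor j (0-based, leftmost factor = most
  significant bit) in a length-n tensor product.\<close>
definition qbit :: "nat \<Rightarrow> nat \<Rightarrow> nat \<Rightarrow> nat" where
  "qbit n j r = (r div 2 ^ (n - 1 - j)) mod 2"

text \<open>Matrix of the Pauli string P (list of length n) = P!0 \<otimes> ... \<otimes> P!(n-1),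
  written entrywise (the entry of a Kronecker product is the product of entries).\<close>
definition pauli_mat :: "pauli list \<Rightarrow> complex mat" where
  "pauli_mat P = (let n = length P in
     mat (2 ^ n) (2 ^ n) (\<lambda>(r, c). \<Prod>j<n. pauli_entry (P ! j) (qbit n j r) (qbit n j c)))"

definition two_site :: "nat \<Rightarrow> pauli \<Rightarrow> pauli \<Rightarrow> nat \<Rightarrow> pauli list" where
  "two_site n A B j = map (\<lambda>k. if k = j then A else if k = Suc j then B else PI) [0..<n]"

definition commutator :: "complex mat \<Rightarrow> complex mat \<Rightarrow> complex mat" where
  "commutator A B = A * B - B * A"

inductive_set real_span_mat :: "nat \<Rightarrow> complex mat set \<Rightarrow> complex mat set"
  for N :: nat and S :: "complex mat set" where
  zero: "0\<^sub>m N N \<in> real_span_mat N S"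
| gen: "A \<in> S \<Longrightarrow> A \<in> real_span_mat N S"
| add: "A \<in> real_span_mat N S \<Longrightarrow> B \<in> real_span_mat N S \<Longrightarrow> A + B \<in> real_span_mat N S"
| smult: "A \<in> real_span_mat N S \<Longrightarrow> complex_of_real c \<cdot>\<^sub>m A \<in> real_span_mat N S"

inductive_set lie_gen :: "nat \<Rightarrow> complex mat set \<Rightarrow> complex mat set"
  for N :: nat and S :: "complex mat set" where
  zero: "0\<^sub>m N N \<in> lie_gen N S"
| gen: "A \<in> S \<Longrightarrow> A \<in> lie_gen N S"
| add: "A \<in> lie_gen N S \<Longrightarrow> B \<in> lie_gen N S \<Longrightarrow> A + B \<in> lie_gen N S"
| smult: "A \<in> lie_gen N S \<Longrightarrow> complex_of_real c \<cdot>\<^sub>m A \<in> lie_gen N S"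
| bracket: "A \<in> lie_gen N S \<Longrightarrow> B \<in> lie_gen N S \<Longrightarrow> commutator A B \<in> lie_gen N S"

definition a13 :: "nat \<Rightarrow> complex mat set" where
  "a13 n = lie_gen (2 ^ n)
     ((\<lambda>P. \<i> \<cdot>\<^sub>m pauli_mat P) `
       {two_site n A B j | A B j. j + 1 < n \<and> (A, B) \<in> {(PX, PX), (PY, PY), (PY, PZ)}})"

definition conj_transpose :: "complex mat \<Rightarrow> complex mat" where
  "conj_transpose A = mat (dim_col A) (dim_row A) (\<lambda>(i, j). cnj (A $$ (j, i)))"

definition mat_trace :: "complex mat \<Rightarrow> complex" where
  "mat_trace A = (\<Sum>i<dim_row A. A $$ (i, i))"

definition su :: "nat \<Rightarrow> complex mat set" where
  "su N = {A \<in> carrier_mat N N. conj_transpose A = - A \<and> mat_trace A = 0}"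

definition lie_iso_su_sum ::
  "complex mat set \<Rightarrow> nat \<Rightarrow> (complex mat \<Rightarrow> complex mat \<times> complex mat) \<Rightarrow> bool" where
  "lie_iso_su_sum L N f \<longleftrightarrow>
     bij_betw f L (su N \<times> su N) \<and>
     (\<forall>A\<in>L. \<forall>B\<in>L. f (A + B) = (fst (f A) + fst (f B), snd (f A) + snd (f B))) \<and>
     (\<forall>A\<in>L. \<forall>c::real. f (complex_of_real c \<cdot>\<^sub>m A) =
        (complex_of_real c \<cdot>\<^sub>m fst (f A), complex_of_real c \<cdot>\<^sub>m snd (f A))) \<and>
     (\<forall>A\<in>L. \<forall>B\<in>L. f (commutator A B) =
        (commutator (fst (f A)) (fst (f B)), commutator (snd (f A)) (snd (f B))))"

end

theory Submission
  imports Defs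
begin


lemma UNIV_pauli: "(UNIV::pauli set) = {PI,PX,PY,PZ}"
  using pauli.exhaust by auto

instance pauli :: finite by standard (simp add: UNIV_pauli)

fun pm :: "pauli \<Rightarrow> pauli \<Rightarrow> pauli" where
  "pm PI b = b" | "pm a PI = a" | "pm PX PX = PI" | "pm PX PY = PZ" | "pm PX PZ = PY"
| "pm PY PX = PZ" | "pm PY PY = PI" | "pm PY PZ = PX"
| "pm PZ PX = PY" | "pm PZ PY = PX" | "pm PZ PZ = PI"

fun ph1 :: "pauli \<Rightarrow> pauli \<Rightarrow> complex" where
  "ph1 PX PY = \<i>" | "ph1 PY PX = - \<i>" | "ph1 PY PZ = \<i>" | "ph1 PZ PY = - \<i>"
| "ph1 PZ PX = \<i>" | "ph1 PX PZ = - \<i>" | "ph1 _ _ = 1"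

definition anti1 :: "pauli \<Rightarrow> pauli \<Rightarrow> bool" where
  "anti1 a b = (a \<noteq> PI \<and> b \<noteq> PI \<and> a \<noteq> b)"

definition sg1 :: "pauli \<Rightarrow> bool" where
  "sg1 a = (a = PY \<or> a = PZ)"

definition pmul :: "pauli list \<Rightarrow> pauli list \<Rightarrow> pauli list" where
  "pmul P Q = map2 pm P Q"

fun phs :: "pauli list \<Rightarrow> pauli list \<Rightarrow> complex" where
  "phs (a#P) (b#Q) = ph1 a b * phs P Q" | "phs _ _ = 1"

fun anti :: "pauli list \<Rightarrow> pauli list \<Rightarrow> bool" where
  "anti (a#P) (b#Q) = (anti1 a b \<noteq> anti P Q)" | "anti _ _ = False"

fun sg :: "pauli list \<Rightarrow> bool" where
  "sg [] = False" | "sg (a#P) = (sg1 a \<noteq> sg P)"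

lemma less2: "(a::nat) < 2 \<Longrightarrow> a = 0 \<or> a = 1" by auto

lemma sum2: "(\<Sum>x<(2::nat). f x) = f 0 + f 1"
  by (simp add: numeral_2_eq_2)

lemma pauli_entry_mult:
  assumes "a < 2" "b < 2"
  shows "(\<Sum>x<2. pauli_entry s a x * pauli_entry t x b) = ph1 s t * pauli_entry (pm s t) a b"
  using less2[OF assms(1)] less2[OF assms(2)]
  by (cases s; cases t) (auto simp: sum2)

lemma sum_split2: "(\<Sum>k<2*(N::nat). f k) = (\<Sum>k<N. f k) + (\<Sum>k<N. f (N + k)::'a::comm_monoid_add)"
proof -
  have "{..<2*N} = {..<N} \<union> {N..<N+N}" by auto
  then have "(\<Sum>k<2*N. f k) = (\<Sum>k<N. f k) + sum f {0+N..<N+N}"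
    by (simp add: sum.union_disjoint ivl_disj_int)
  also have "sum f {0+N..<N+N} = (\<Sum>k<N. f (N + k))"
    by (subst sum.shift_bounds_nat_ivl) (simp add: atLeast0LessThan add.commute)
  finally show ?thesis .
qed

lemma sum_split2': "(\<Sum>k<2*(N::nat). f k) = (\<Sum>x<2. \<Sum>k<N. f (x * N + k)::'a::comm_monoid_add)"
  by (simp add: sum_split2 sum2)

lemma qbit_mod: "k < n \<Longrightarrow> (r mod 2^n) div 2^k mod 2 = (r::nat) div 2^k mod 2"
  by (metis bit_iff_odd bit_take_bit_iff take_bit_eq_mod odd_iff_mod_2_eq_one mod2_eq_if)

lemma qbit_Suc0: "r < 2 * 2^n \<Longrightarrow> qbit (Suc n) 0 r = r div 2^n"
  unfolding qbit_def by (simp add: less_mult_imp_div_less)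

lemma qbit_SucSuc: "j < n \<Longrightarrow> qbit (Suc n) (Suc j) r = qbit n j (r mod 2^n)"
  unfolding qbit_def by (simp add: qbit_mod)

lemma pauli_mat_dim[simp]:
  "dim_row (pauli_mat P) = 2 ^ length P" "dim_col (pauli_mat P) = 2 ^ length P"
  unfolding pauli_mat_def Let_def by auto

lemma pauli_mat_carrier: "pauli_mat P \<in> carrier_mat (2 ^ length P) (2 ^ length P)"
  by auto

lemma pauli_mat_Nil: "pauli_mat [] = 1\<^sub>m 1"
  by (rule eq_matI) (auto simp: pauli_mat_def)

lemma pauli_mat_Cons:
  assumes "r < 2 * 2^length P" "c < 2 * 2^length P"
  shows "pauli_mat (a#P) $$ (r,c) = pauli_entry a (r div 2^length P) (c div 2^length P)
           * pauli_mat P $$ (r mod 2^length P, c mod 2^length P)"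
proof -
  let ?n = "length P"
  have "pauli_mat (a#P) $$ (r,c) = (\<Prod>j<Suc ?n. pauli_entry ((a#P) ! j) (qbit (Suc ?n) j r) (qbit (Suc ?n) j c))"
    using assms by (simp add: pauli_mat_def)
  also have "\<dots> = pauli_entry a (qbit (Suc ?n) 0 r) (qbit (Suc ?n) 0 c) *
     (\<Prod>j<?n. pauli_entry (P ! j) (qbit (Suc ?n) (Suc j) r) (qbit (Suc ?n) (Suc j) c))"
    by (subst prod.lessThan_Suc_shift) simp
  also have "(\<Prod>j<?n. pauli_entry (P ! j) (qbit (Suc ?n) (Suc j) r) (qbit (Suc ?n) (Suc j) c))
     = (\<Prod>j<?n. pauli_entry (P ! j) (qbit ?n j (r mod 2^?n)) (qbit ?n j (c mod 2^?n)))"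
    by (rule prod.cong) (auto simp: qbit_SucSuc)
  also have "\<dots> = pauli_mat P $$ (r mod 2^?n, c mod 2^?n)"
    by (simp add: pauli_mat_def Let_def)
  finally show ?thesis using assms by (simp add: qbit_Suc0)
qed


lemma mult_entry:
  "A \<in> carrier_mat n m \<Longrightarrow> B \<in> carrier_mat m p \<Longrightarrow> i < n \<Longrightarrow> j < p \<Longrightarrow>
   (A * B) $$ (i,j) = (\<Sum>k<m. A $$ (i,k) * B $$ (k,j))"
  by (simp add: scalar_prod_def atLeast0LessThan)

lemma divmodN: "k < (N::nat) \<Longrightarrow> (x * N + k) div N = x" "k < N \<Longrightarrow> (x * N + k) mod N = k"
  by auto

lemma div_lt2: "r < 2 * (N::nat) \<Longrightarrow> r div N < 2"
  by (simp add: less_mult_imp_div_less)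

lemma pmul_Cons[simp]: "pmul (a#P) (b#Q) = pm a b # pmul P Q"
  by (simp add: pmul_def)

lemma pmul_Nil[simp]: "pmul [] Q = []" "pmul P [] = []"
  by (auto simp: pmul_def)

lemma length_pmul[simp]: "length (pmul P Q) = min (length P) (length Q)"
  by (simp add: pmul_def)

lemma pauli_mat_mult_entry:
  "length P = length Q \<Longrightarrow> r < 2^length P \<Longrightarrow> c < 2^length P \<Longrightarrow>
   (\<Sum>k<2^length P. pauli_mat P $$ (r,k) * pauli_mat Q $$ (k,c)) = phs P Q * pauli_mat (pmul P Q) $$ (r,c)"
proof (induction P arbitrary: Q r c)
  case Nil
  then show ?case by (simp add: pauli_mat_Nil)
next
  case (Cons a P')
  obtain b Q' where Q: "Q = b # Q'" using Cons.prems(1) by (cases Q) auto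
  have len: "length Q' = length P'" using Cons.prems(1) Q by simp
  define N where "N = (2::nat) ^ length P'"
  have N0: "N > 0" by (simp add: N_def)
  have len2N: "2^length (a#P') = 2 * N" by (simp add: N_def)
  have r: "r < 2 * N" and c: "c < 2 * N" using Cons.prems(2,3) by (auto simp: N_def)
  have "(\<Sum>k<2^length (a#P'). pauli_mat (a#P') $$ (r,k) * pauli_mat Q $$ (k,c))
      = (\<Sum>x<2. \<Sum>k<N. pauli_mat (a#P') $$ (r,x*N+k) * pauli_mat (b#Q') $$ (x*N+k,c))"
    unfolding Q using sum_split2'[where N=N] by (simp only: len2N)
  also have "\<dots> = (\<Sum>x<2. \<Sum>k<N. (pauli_entry a (r div N) x * pauli_entry b x (c div N)) *
        (pauli_mat P' $$ (r mod N, k) * pauli_mat Q' $$ (k, c mod N)))"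
  proof (rule sum.cong[OF refl], rule sum.cong[OF refl])
    fix x k assume x: "x \<in> {..<(2::nat)}" and k: "k \<in> {..<N}"
    have xk: "x * N + k < 2 * N" using less2[of x] x k by auto
    show "pauli_mat (a#P') $$ (r,x*N+k) * pauli_mat (b#Q') $$ (x*N+k,c) =
        (pauli_entry a (r div N) x * pauli_entry b x (c div N)) *
        (pauli_mat P' $$ (r mod N, k) * pauli_mat Q' $$ (k, c mod N))"
      using k xk r c len by (simp add: pauli_mat_Cons N_def[symmetric] divmodN)
  qed
  also have "\<dots> = (\<Sum>x<2. pauli_entry a (r div N) x * pauli_entry b x (c div N)) *
        (\<Sum>k<N. pauli_mat P' $$ (r mod N, k) * pauli_mat Q' $$ (k, c mod N))"
    by (simp add: sum_product)
  also have "\<dots> = (ph1 a b * pauli_entry (pm a b) (r div N) (c div N)) *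
        (phs P' Q' * pauli_mat (pmul P' Q') $$ (r mod N, c mod N))"
    using Cons.IH[OF len[symmetric], of "r mod N" "c mod N"] pauli_entry_mult div_lt2[OF r] div_lt2[OF c] N0
    by (simp add: N_def)
  also have "\<dots> = phs (a#P') Q * pauli_mat (pmul (a#P') Q) $$ (r,c)"
    using r c len by (simp add: Q pauli_mat_Cons N_def[symmetric])
  finally show ?case .
qed



lemma pauli_mat_mult:
  assumes "length P = length Q"
  shows "pauli_mat P * pauli_mat Q = phs P Q \<cdot>\<^sub>m pauli_mat (pmul P Q)"
proof (rule eq_matI)
  fix i j assume a: "i < dim_row (phs P Q \<cdot>\<^sub>m pauli_mat (pmul P Q))" "j < dim_col (phs P Q \<cdot>\<^sub>m pauli_mat (pmul P Q))"
  have ij: "i < 2^length P" "j < 2^length P" using a assms by (simp_all del: power_strict_increasing_iff)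
  have cq: "pauli_mat Q \<in> carrier_mat (2^length P) (2^length P)" using assms pauli_mat_carrier[of Q] by simp
  have "(pauli_mat P * pauli_mat Q) $$ (i,j) = (\<Sum>k<2^length P. pauli_mat P $$ (i,k) * pauli_mat Q $$ (k,j))"
    by (rule mult_entry[OF pauli_mat_carrier cq ij])
  also have "\<dots> = phs P Q * pauli_mat (pmul P Q) $$ (i,j)"
    by (rule pauli_mat_mult_entry[OF assms ij])
  also have "\<dots> = (phs P Q \<cdot>\<^sub>m pauli_mat (pmul P Q)) $$ (i,j)"
    using a by (simp only: index_smult_mat)
  finally show "(pauli_mat P * pauli_mat Q) $$ (i,j) = (phs P Q \<cdot>\<^sub>m pauli_mat (pmul P Q)) $$ (i,j)" .
qed (use assms in simp_all)

lemma eq_divmod: "0 < (N::nat) \<Longrightarrow> (r = c) = (r div N = c div N \<and> r mod N = c mod N)"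
  by (metis div_mult_mod_eq)

lemma pauli_mat_I: "pauli_mat (replicate n PI) = 1\<^sub>m (2^n)"
proof (induction n)
  case 0 then show ?case by (simp add: pauli_mat_Nil)
next
  case (Suc n)
  show ?case
  proof (rule eq_matI)
    fix i j assume "i < dim_row (1\<^sub>m (2 ^ Suc n) :: complex mat)" "j < dim_col (1\<^sub>m (2 ^ Suc n) :: complex mat)"
    then have ij: "i < 2 * 2^n" "j < 2 * 2^n" by simp_all
    have "pauli_mat (replicate (Suc n) PI) $$ (i,j) =
       pauli_entry PI (i div 2^n) (j div 2^n) * pauli_mat (replicate n PI) $$ (i mod 2^n, j mod 2^n)"
      using ij pauli_mat_Cons[of i "replicate n PI" j PI] by simp
    also have "\<dots> = (if i = j then 1 else 0)"
      using Suc eq_divmod[of "2^n" i j] by simp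
    finally show "pauli_mat (replicate (Suc n) PI) $$ (i,j) = 1\<^sub>m (2 ^ Suc n) $$ (i,j)"
      using ij by simp
  qed simp_all
qed

lemma pauli_entry_herm: "a < 2 \<Longrightarrow> b < 2 \<Longrightarrow> cnj (pauli_entry s b a) = pauli_entry s a b"
  using less2[of a] less2[of b] by (cases s) auto

lemma pauli_mat_herm:
  "r < 2^length P \<Longrightarrow> c < 2^length P \<Longrightarrow> cnj (pauli_mat P $$ (c,r)) = pauli_mat P $$ (r,c)"
proof (induction P arbitrary: r c)
  case Nil then show ?case by (simp add: pauli_mat_Nil)
next
  case (Cons a P)
  have r: "r < 2 * 2^length P" and c: "c < 2 * 2^length P" using Cons.prems by simp_all
  show ?case
    using r c Cons.IH[of "r mod 2^length P" "c mod 2^length P"] div_lt2[OF r] div_lt2[OF c]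
    by (simp add: pauli_mat_Cons pauli_entry_herm)
qed

lemma pm_comm: "pm a b = pm b a"
  by (cases a; cases b) auto

lemma pmul_comm: "pmul P Q = pmul Q P"
proof (induction P arbitrary: Q)
  case Nil then show ?case by simp
next
  case (Cons a P) then show ?case by (cases Q) (auto simp: pm_comm)
qed

lemma anti1_sym: "anti1 a b = anti1 b a" by (auto simp: anti1_def)

lemma ph1_swap: "ph1 b a = (if anti1 a b then -1 else 1) * ph1 a b"
  by (cases a; cases b) (auto simp: anti1_def)

lemma ph1_cnj: "cnj (ph1 a b) = ph1 b a"
  by (cases a; cases b) auto

lemma ph1_nz: "ph1 a b \<noteq> 0"
  by (cases a; cases b) auto

lemma phs_swap: "length P = length Q \<Longrightarrow> phs Q P = (if anti P Q then -1 else 1) * phs P Q"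
proof (induction P arbitrary: Q)
  case Nil then show ?case by simp
next
  case (Cons a P)
  then obtain b Q' where Q: "Q = b # Q'" by (cases Q) auto
  with Cons.prems have "length P = length Q'" by simp
  with Cons.IH[of Q'] ph1_swap[of a b] anti1_sym[of a b] show ?case by (simp add: Q)
qed

lemma phs_cnj: "cnj (phs P Q) = phs Q P"
  by (induction P Q rule: phs.induct) (auto simp: ph1_cnj)

lemma phs_nz: "phs P Q \<noteq> 0"
  by (induction P Q rule: phs.induct) (auto simp: ph1_nz)


lemma anti_sym: "anti P Q = anti Q P"
  by (induction P Q rule: anti.induct) (auto simp: anti1_sym)

lemma phs_anti_imag:
  assumes "length P = length Q" "anti P Q"
  shows "phs P Q = \<i> * complex_of_real (Im (phs P Q))"
proof -
  have "cnj (phs P Q) = - phs P Q" using phs_cnj[of P Q] phs_swap[OF assms(1)] assms(2) by simp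
  then have "Re (cnj (phs P Q)) = Re (- phs P Q)" by simp
  then have "Re (phs P Q) = 0" by simp
  then show ?thesis by (simp add: complex_eq_iff)
qed

lemma smult_pauli_mult:
  assumes "length P = length Q"
  shows "(\<i> \<cdot>\<^sub>m pauli_mat P) * (\<i> \<cdot>\<^sub>m pauli_mat Q) = (- phs P Q) \<cdot>\<^sub>m pauli_mat (pmul P Q)"
proof -
  have cq: "pauli_mat Q \<in> carrier_mat (2^length P) (2^length P)" using assms pauli_mat_carrier[of Q] by simp
  have "(\<i> \<cdot>\<^sub>m pauli_mat P) * (\<i> \<cdot>\<^sub>m pauli_mat Q) = \<i> \<cdot>\<^sub>m (\<i> \<cdot>\<^sub>m (pauli_mat P * pauli_mat Q))"
    using mult_smult_assoc_mat[OF pauli_mat_carrier[of P] smult_carrier_mat[OF cq], of \<i> \<i>]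
          mult_smult_distrib[OF pauli_mat_carrier[of P] cq, of \<i>] by simp
  also have "\<dots> = (- phs P Q) \<cdot>\<^sub>m pauli_mat (pmul P Q)"
    unfolding pauli_mat_mult[OF assms] by (rule eq_matI) auto
  finally show ?thesis .
qed

lemma commutator_pauli:
  assumes "length P = n" "length Q = n"
  shows "commutator (\<i> \<cdot>\<^sub>m pauli_mat P) (\<i> \<cdot>\<^sub>m pauli_mat Q) =
    (if anti P Q then complex_of_real (-2 * Im (phs P Q)) \<cdot>\<^sub>m (\<i> \<cdot>\<^sub>m pauli_mat (pmul P Q))
     else 0\<^sub>m (2^n) (2^n))"
proof -
  have l: "length P = length Q" using assms by simp
  have c: "commutator (\<i> \<cdot>\<^sub>m pauli_mat P) (\<i> \<cdot>\<^sub>m pauli_mat Q) =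
     (- phs P Q) \<cdot>\<^sub>m pauli_mat (pmul P Q) - (- phs Q P) \<cdot>\<^sub>m pauli_mat (pmul P Q)"
    unfolding commutator_def smult_pauli_mult[OF l] smult_pauli_mult[OF l[symmetric]]
    by (simp add: pmul_comm)
  show ?thesis
  proof (cases "anti P Q")
    case True
    have "phs Q P = - phs P Q" using phs_swap[OF l] True by simp
    moreover have "phs P Q = \<i> * complex_of_real (Im (phs P Q))" using phs_anti_imag[OF l True] .
    ultimately show ?thesis using True assms unfolding c
      by (intro eq_matI) (auto simp: algebra_simps)
  next
    case False
    have "phs Q P = phs P Q" using phs_swap[OF l] False by simp
    then show ?thesis using False assms unfolding c
      by (intro eq_matI) auto
  qed
qed

lemma phs_self: "phs P P = 1"
  by (induction P) (auto, case_tac a, auto)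

lemma pmul_self: "pmul P P = replicate (length P) PI"
  by (induction P) (auto, case_tac a, auto)

lemma pauli_mat_sq: "pauli_mat P * pauli_mat P = 1\<^sub>m (2 ^ length P)"
proof -
  have "(1::complex) \<cdot>\<^sub>m (1\<^sub>m (2 ^ length P)) = 1\<^sub>m (2 ^ length P)" by (rule eq_matI) auto
  then show ?thesis using pauli_mat_mult[of P P] by (simp add: phs_self pmul_self pauli_mat_I)
qed

lemma pauli_mat_nz: "\<exists>r<2^length P. \<exists>c<2^length P. pauli_mat P $$ (r,c) \<noteq> 0"
proof (rule ccontr)
  assume "\<not> ?thesis"
  then have z: "\<And>r c. r<2^length P \<Longrightarrow> c<2^length P \<Longrightarrow> pauli_mat P $$ (r,c) = 0" by auto
  have "(pauli_mat P * pauli_mat P) $$ (0,0) = 0"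
    by (subst mult_entry[OF pauli_mat_carrier pauli_mat_carrier]) (auto simp: z)
  then show False using pauli_mat_sq[of P] by simp
qed


lemma compl_div: assumes "r < 2 * (N::nat)" shows "(2*N - 1 - r) div N = 1 - r div N"
proof (cases "r < N")
  case True
  define m where "m = N - 1 - r"
  have m: "m < N" using True by (simp add: m_def)
  have e: "2*N - 1 - r = N + m" using True by (simp add: m_def)
  have "(N + m) div N = 1" using m by simp
  then show ?thesis using True by (simp only: e) (simp add: m_def)
next
  case False
  then have "2*N - 1 - r < N" using assms by simp
  then show ?thesis using False assms by (simp add: div_lt2 le_div_geq)
qed

lemma compl_mod: assumes "r < 2 * (N::nat)" shows "(2*N - 1 - r) mod N = N - 1 - r mod N"
proof (cases "r < N")
  case True
  define m where "m = N - 1 - r"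
  have m: "m < N" using True by (simp add: m_def)
  have e: "2*N - 1 - r = N + m" using True by (simp add: m_def)
  have "(N + m) mod N = m" using m by simp
  then show ?thesis using True by (simp only: e) (simp add: m_def)
next
  case False
  then have "2*N - 1 - r < N" using assms by simp
  moreover have "r mod N = r - N" using False assms by (simp add: le_mod_geq)
  ultimately show ?thesis using False assms by simp
qed

lemma compl_div': "r < 2 * (N::nat) \<Longrightarrow> (2*N - Suc r) div N = Suc 0 - r div N"
  using compl_div by simp
lemma compl_mod': "r < 2 * (N::nat) \<Longrightarrow> (2*N - Suc r) mod N = N - Suc (r mod N)"
  using compl_mod by simp

lemma compl_lt: "r < (M::nat) \<Longrightarrow> M - 1 - r < M" by simp

lemma pauli_entry_flip: "a < 2 \<Longrightarrow> b < 2 \<Longrightarrow>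
  pauli_entry s (1-a) (1-b) = (if sg1 s then -1 else 1) * pauli_entry s a b"
  using less2[of a] less2[of b] by (cases s) (auto simp: sg1_def)

lemma pauli_mat_flip:
  "r < 2^length P \<Longrightarrow> c < 2^length P \<Longrightarrow>
   pauli_mat P $$ (2^length P - 1 - r, 2^length P - 1 - c) = (if sg P then -1 else 1) * pauli_mat P $$ (r,c)"
proof (induction P arbitrary: r c)
  case Nil then show ?case by (simp add: pauli_mat_Nil)
next
  case (Cons a P)
  define N where "N = (2::nat)^length P"
  have r: "r < 2 * N" and c: "c < 2 * N" using Cons.prems by (simp_all add: N_def)
  have e: "2^length (a#P) - 1 - r = 2 * N - 1 - r" "2^length (a#P) - 1 - c = 2 * N - 1 - c" by (simp_all add: N_def)
  have "pauli_mat (a#P) $$ (2 * N - 1 - r, 2 * N - 1 - c) =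
        pauli_entry a (1 - r div N) (1 - c div N) * pauli_mat P $$ (N - 1 - r mod N, N - 1 - c mod N)"
    using pauli_mat_Cons[of "2 * N - 1 - r" P "2 * N - 1 - c" a] r c
    by (simp add: N_def[symmetric] compl_div' compl_mod')
  also have "\<dots> = (if sg1 a then -1 else 1) * pauli_entry a (r div N) (c div N) *
      ((if sg P then -1 else 1) * pauli_mat P $$ (r mod N, c mod N))"
    using pauli_entry_flip[OF div_lt2[OF r] div_lt2[OF c], of a] Cons.IH[of "r mod N" "c mod N"]
    by (simp add: N_def)
  also have "\<dots> = (if sg (a#P) then -1 else 1) * pauli_mat (a#P) $$ (r,c)"
    using pauli_mat_Cons[of r P c a] r c by (simp add: N_def[symmetric])
  finally show ?case unfolding e .
qed

lemma sum_cons_split: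
  fixes g :: "nat \<Rightarrow> complex"
  shows "(\<Sum>r<2^length (a#P). g r) = (\<Sum>x<2. \<Sum>k<2^length P. g (x * 2^length P + k))"
  using sum_split2'[where N="2^length P" and f=g] by simp

lemma trace_pauli:
  "P \<noteq> replicate (length P) PI \<Longrightarrow> (\<Sum>r<2^length P. pauli_mat P $$ (r,r)) = 0"
proof (induction P)
  case Nil then show ?case by simp
next
  case (Cons a P)
  define N where "N = (2::nat)^length P"
  have "(\<Sum>r<2^length (a#P). pauli_mat (a#P) $$ (r,r)) = (\<Sum>x<2. \<Sum>k<N. pauli_mat (a#P) $$ (x*N+k, x*N+k))"
    unfolding N_def by (rule sum_cons_split)
  also have "\<dots> = (\<Sum>x<2. \<Sum>k<N. pauli_entry a x x * pauli_mat P $$ (k,k))"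
  proof (intro sum.cong refl)
    fix x k assume "x \<in> {..<(2::nat)}" "k \<in> {..<N}"
    then have "x * N + k < 2 * N" "k < N" using less2[of x] by auto
    then show "pauli_mat (a#P) $$ (x*N+k, x*N+k) = pauli_entry a x x * pauli_mat P $$ (k,k)"
      using pauli_mat_Cons[of "x*N+k" P "x*N+k" a] by (simp add: N_def[symmetric] divmodN)
  qed
  also have "\<dots> = (\<Sum>x<2. pauli_entry a x x) * (\<Sum>k<N. pauli_mat P $$ (k,k))"
    by (rule sum_product[symmetric])
  also have "\<dots> = 0"
  proof (cases "a = PI")
    case True
    then have "P \<noteq> replicate (length P) PI" using Cons.prems by simp
    then show ?thesis using Cons.IH by (simp add: N_def)
  next
    case False
    then show ?thesis by (cases a) (auto simp: sum2)
  qed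
  finally show ?case .
qed

lemma antitrace_pauli:
  "P \<noteq> replicate (length P) PX \<Longrightarrow> (\<Sum>r<2^length P. pauli_mat P $$ (r, 2^length P - 1 - r)) = 0"
proof (induction P)
  case Nil then show ?case by simp
next
  case (Cons a P)
  define N where "N = (2::nat)^length P"
  have e: "2^length (a#P) = 2 * N" by (simp add: N_def)
  have "(\<Sum>r<2^length (a#P). pauli_mat (a#P) $$ (r, 2^length (a#P) - 1 - r)) =
      (\<Sum>x<2. \<Sum>k<N. pauli_mat (a#P) $$ (x*N+k, 2*N - 1 - (x*N+k)))"
    unfolding e by (rule sum_split2')
  also have "\<dots> = (\<Sum>x<2. \<Sum>k<N. pauli_entry a x (1 - x) * pauli_mat P $$ (k, N - 1 - k))"
  proof (intro sum.cong refl)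
    fix x k assume "x \<in> {..<(2::nat)}" "k \<in> {..<N}"
    then have xk: "x * N + k < 2 * N" "k < N" using less2[of x] by auto
    then show "pauli_mat (a#P) $$ (x*N+k, 2*N - 1 - (x*N+k)) = pauli_entry a x (1 - x) * pauli_mat P $$ (k, N - 1 - k)"
      using pauli_mat_Cons[of "x*N+k" P "2*N - 1 - (x*N+k)" a] compl_div[OF xk(1)] compl_mod[OF xk(1)]
      by (simp add: N_def[symmetric] divmodN)
  qed
  also have "\<dots> = (\<Sum>x<2. pauli_entry a x (1-x)) * (\<Sum>k<N. pauli_mat P $$ (k, N - 1 - k))"
    by (rule sum_product[symmetric])
  also have "\<dots> = 0"
  proof (cases "a = PX")
    case True
    then have "P \<noteq> replicate (length P) PX" using Cons.prems by simp
    then show ?thesis using Cons.IH by (simp add: N_def)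
  next
    case False
    then show ?thesis by (cases a) (auto simp: sum2)
  qed
  finally show ?case .
qed

lemma pauli_mat_X:
  "r < 2^n \<Longrightarrow> c < 2^n \<Longrightarrow> pauli_mat (replicate n PX) $$ (r,c) = (if c = 2^n - 1 - r then 1 else 0)"
proof (induction n arbitrary: r c)
  case 0 then show ?case by (simp add: pauli_mat_Nil)
next
  case (Suc n)
  define N where "N = (2::nat)^n"
  have r: "r < 2 * N" and c: "c < 2 * N" using Suc.prems by (simp_all add: N_def)
  have N0: "N > 0" by (simp add: N_def)
  have "pauli_mat (replicate (Suc n) PX) $$ (r,c) =
     pauli_entry PX (r div N) (c div N) * pauli_mat (replicate n PX) $$ (r mod N, c mod N)"
    using pauli_mat_Cons[of r "replicate n PX" c PX] r c by (simp add: N_def)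
  also have "\<dots> = (if c div N = 1 - r div N \<and> c mod N = N - 1 - r mod N then 1 else 0)"
    using Suc.IH[of "r mod N" "c mod N"] N0 less2[OF div_lt2[OF r]] less2[OF div_lt2[OF c]]
    by (auto simp: N_def)
  also have "(c div N = 1 - r div N \<and> c mod N = N - 1 - r mod N) = (c = 2 * N - 1 - r)"
    using eq_divmod[OF N0, of c "2*N - 1 - r"] compl_div[OF r] compl_mod[OF r] by simp
  finally show ?case by (simp add: N_def)
qed


abbreviation Xn :: "nat \<Rightarrow> complex mat" where "Xn n \<equiv> pauli_mat (replicate n PX)"

lemma Xn_carrier: "Xn n \<in> carrier_mat (2^n) (2^n)"
  using pauli_mat_carrier[of "replicate n PX"] by simp

lemma mult_X_right:
  assumes A: "A \<in> carrier_mat (2^n) (2^n)" and r: "r < 2^n" and c: "c < 2^n"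
  shows "(A * Xn n) $$ (r,c) = A $$ (r, 2^n - 1 - c)"
proof -
  have "(A * Xn n) $$ (r,c) = (\<Sum>k<2^n. A $$ (r,k) * Xn n $$ (k,c))"
    by (rule mult_entry[OF A Xn_carrier r c])
  also have "\<dots> = (\<Sum>k<2^n. if k = 2^n - 1 - c then A $$ (r,k) else 0)"
    by (rule sum.cong) (use c in \<open>auto simp: pauli_mat_X\<close>)
  also have "\<dots> = A $$ (r, 2^n - 1 - c)"
    by (simp add: sum.delta)
  finally show ?thesis .
qed

lemma mult_X_left:
  assumes A: "A \<in> carrier_mat (2^n) (2^n)" and r: "r < 2^n" and c: "c < 2^n"
  shows "(Xn n * A) $$ (r,c) = A $$ (2^n - 1 - r, c)"
proof -
  have "(Xn n * A) $$ (r,c) = (\<Sum>k<2^n. Xn n $$ (r,k) * A $$ (k,c))"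
    by (rule mult_entry[OF Xn_carrier A r c])
  also have "\<dots> = (\<Sum>k<2^n. if k = 2^n - 1 - r then A $$ (k,c) else 0)"
    by (rule sum.cong) (use r in \<open>auto simp: pauli_mat_X\<close>)
  also have "\<dots> = A $$ (2^n - 1 - r, c)"
    by (simp add: sum.delta)
  finally show ?thesis .
qed

lemma commute_X_iff:
  assumes "length P = n"
  shows "(pauli_mat P * Xn n = Xn n * pauli_mat P) \<longleftrightarrow> \<not> sg P"
proof
  assume eq: "pauli_mat P * Xn n = Xn n * pauli_mat P"
  have cP: "pauli_mat P \<in> carrier_mat (2^n) (2^n)" using assms pauli_mat_carrier[of P] by simp
  show "\<not> sg P"
  proof
    assume s: "sg P"
    obtain r c where rc: "r < 2^n" "c < 2^n" "pauli_mat P $$ (r,c) \<noteq> 0"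
      using pauli_mat_nz[of P] assms by auto
    define c' where "c' = 2^n - 1 - c"
    have c': "c' < 2^n" and cc: "2^n - 1 - c' = c" using rc by (auto simp: c'_def)
    have "(pauli_mat P * Xn n) $$ (r,c') = (Xn n * pauli_mat P) $$ (r,c')" using eq by simp
    then have "pauli_mat P $$ (r, c) = pauli_mat P $$ (2^n - 1 - r, c')"
      using mult_X_right[OF cP rc(1) c'] mult_X_left[OF cP rc(1) c'] cc by simp
    also have "\<dots> = - pauli_mat P $$ (r, c)"
      using pauli_mat_flip[of r P c] rc s assms cc by (simp add: c'_def)
    finally have "pauli_mat P $$ (r, c) = 0" by simp
    with rc show False by simp
  qed
next
  assume s: "\<not> sg P"
  have cP: "pauli_mat P \<in> carrier_mat (2^n) (2^n)" using assms pauli_mat_carrier[of P] by simp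
  show "pauli_mat P * Xn n = Xn n * pauli_mat P"
  proof (rule eq_matI)
    fix r c assume "r < dim_row (Xn n * pauli_mat P)" "c < dim_col (Xn n * pauli_mat P)"
    then have rc: "r < 2^n" "c < 2^n" using assms by simp_all
    have c': "2^n - 1 - c < 2^n" and cc: "2^n - 1 - (2^n - 1 - c) = c" using rc by auto
    show "(pauli_mat P * Xn n) $$ (r,c) = (Xn n * pauli_mat P) $$ (r,c)"
      using mult_X_right[OF cP rc] mult_X_left[OF cP rc] pauli_mat_flip[of r P "2^n - 1 - c"] rc s assms cc
      by simp
  qed (use assms in simp_all)
qed


definition targ :: "nat \<Rightarrow> pauli list set" where
  "targ n = {P. length P = n \<and> P \<noteq> replicate n PI \<and> P \<noteq> replicate n PX \<and>
                 pauli_mat P * pauli_mat (replicate n PX) = pauli_mat (replicate n PX) * pauli_mat P}"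

lemma targ_iff: "P \<in> targ n \<longleftrightarrow> length P = n \<and> P \<noteq> replicate n PI \<and> P \<noteq> replicate n PX \<and> \<not> sg P"
  unfolding targ_def using commute_X_iff by auto

lemma sg_pmul: "length P = length Q \<Longrightarrow> sg (pmul P Q) = (sg P \<noteq> sg Q)"
proof (induction P arbitrary: Q)
  case Nil then show ?case by simp
next
  case (Cons a P) then show ?case
    by (cases Q) (auto, (case_tac a; case_tac aa; simp add: sg1_def)+)
qed

lemma anti_self: "\<not> anti P P"
  by (induction P) (auto simp: anti1_def)

lemma anti1_pm: "anti1 p (pm q r) = (anti1 p q \<noteq> anti1 p r)"
  by (cases p; cases q; cases r) (auto simp: anti1_def)

lemma anti_pmul: "length Q = length R \<Longrightarrow> anti P (pmul Q R) = (anti P Q \<noteq> anti P R)"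
proof (induction P arbitrary: Q R)
  case Nil then show ?case by simp
next
  case (Cons a P)
  then show ?case
    by (cases Q; cases R) (auto simp: anti1_pm)
qed

lemma anti_X: "anti P (replicate (length P) PX) = sg P"
proof (induction P)
  case Nil then show ?case by simp
next
  case (Cons a P) then show ?case by (cases a) (auto simp: anti1_def sg1_def)
qed

lemma pm_cancel: "pm p (pm p q) = q"
  by (cases p; cases q) auto

lemma pmul_cancel: "length P = length Q \<Longrightarrow> pmul P (pmul P Q) = Q"
proof (induction P arbitrary: Q)
  case Nil then show ?case by simp
next
  case (Cons a P) then show ?case by (cases Q) (auto simp: pm_cancel)
qed

lemma pmul_targ:
  assumes P: "P \<in> targ n" and Q: "Q \<in> targ n" and a: "anti P Q"
  shows "pmul P Q \<in> targ n"
proof -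
  have l: "length P = n" "length Q = n" using P Q by (auto simp: targ_iff)
  have s: "\<not> sg P" "\<not> sg Q" using P Q by (auto simp: targ_iff)
  have "pmul P Q \<noteq> replicate n PI"
  proof
    assume "pmul P Q = replicate n PI"
    then have "pmul P (pmul P Q) = pmul P (replicate (length P) PI)" using l by simp
    also have "pmul P (replicate (length P) PI) = P"
    proof (induction P arbitrary: n)
      case Nil then show ?case by simp
    next
      case (Cons a P) then show ?case by (cases a) (auto simp: pmul_def)
    qed
    finally have "Q = P" using pmul_cancel[of P Q] l by simp
    with a anti_self show False by simp
  qed
  moreover have "pmul P Q \<noteq> replicate n PX"
  proof
    assume "pmul P Q = replicate n PX"
    then have "anti P (pmul P Q) = sg P" using anti_X[of P] l by simp
    then have "anti P Q" "\<not> anti P Q" using anti_pmul[of P Q P] a anti_self[of P] s l by auto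
    then show False by simp
  qed
  ultimately show ?thesis using l s by (simp add: targ_iff sg_pmul)
qed


lemma comm_carrier: "A \<in> carrier_mat N N \<Longrightarrow> B \<in> carrier_mat N N \<Longrightarrow> commutator A B \<in> carrier_mat N N"
  unfolding commutator_def by auto

lemma comm_entry:
  "A \<in> carrier_mat N N \<Longrightarrow> B \<in> carrier_mat N N \<Longrightarrow> i < N \<Longrightarrow> j < N \<Longrightarrow>
   commutator A B $$ (i,j) = (\<Sum>k<N. A $$ (i,k) * B $$ (k,j) - B $$ (i,k) * A $$ (k,j))"
proof -
  assume a: "A \<in> carrier_mat N N" "B \<in> carrier_mat N N" "i < N" "j < N"
  have "(A*B) $$ (i,j) = (\<Sum>k<N. A $$ (i,k) * B $$ (k,j))" by (rule mult_entry[OF a])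
  moreover have "(B*A) $$ (i,j) = (\<Sum>k<N. B $$ (i,k) * A $$ (k,j))" by (rule mult_entry[OF a(2,1,3,4)])
  ultimately show ?thesis unfolding commutator_def using a by (simp add: sum_subtractf)
qed

lemma comm_add_left:
  assumes "A \<in> carrier_mat N N" "B \<in> carrier_mat N N" "C \<in> carrier_mat N N"
  shows "commutator (A + B) C = commutator A C + commutator B C"
proof (rule eq_matI)
  have ABc: "A + B \<in> carrier_mat N N" using assms by simp
  fix i j assume "i < dim_row (commutator A C + commutator B C)" "j < dim_col (commutator A C + commutator B C)"
  then have ij: "i < N" "j < N" using assms comm_carrier[of B N C] by auto
  show "commutator (A + B) C $$ (i,j) = (commutator A C + commutator B C) $$ (i,j)"
    using assms ij comm_carrier[of A N C] comm_carrier[of B N C]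
    by (simp add: comm_entry[OF ABc assms(3) ij] comm_entry[OF assms(1,3) ij]
        comm_entry[OF assms(2,3) ij] sum.distrib[symmetric] algebra_simps)
qed (use assms comm_carrier[of B N C] comm_carrier[of "A+B" N C] in auto)

lemma comm_add_right:
  assumes "A \<in> carrier_mat N N" "B \<in> carrier_mat N N" "C \<in> carrier_mat N N"
  shows "commutator C (A + B) = commutator C A + commutator C B"
proof (rule eq_matI)
  have ABc: "A + B \<in> carrier_mat N N" using assms by simp
  fix i j assume "i < dim_row (commutator C A + commutator C B)" "j < dim_col (commutator C A + commutator C B)"
  then have ij: "i < N" "j < N" using assms comm_carrier[of C N B] by auto
  show "commutator C (A + B) $$ (i,j) = (commutator C A + commutator C B) $$ (i,j)"
    using assms ij comm_carrier[of C N A] comm_carrier[of C N B]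
    by (simp add: comm_entry[OF assms(3) ABc ij] comm_entry[OF assms(3,1) ij]
        comm_entry[OF assms(3,2) ij] sum.distrib[symmetric] algebra_simps)
qed (use assms comm_carrier[of C N B] comm_carrier[of C N "A+B"] in auto)

lemma comm_smult_left:
  assumes "A \<in> carrier_mat N N" "C \<in> carrier_mat N N"
  shows "commutator (c \<cdot>\<^sub>m A) C = c \<cdot>\<^sub>m commutator A C"
proof (rule eq_matI)
  fix i j assume "i < dim_row (c \<cdot>\<^sub>m commutator A C)" "j < dim_col (c \<cdot>\<^sub>m commutator A C)"
  then have ij: "i < N" "j < N" using assms comm_carrier[of A N C] by auto
  show "commutator (c \<cdot>\<^sub>m A) C $$ (i,j) = (c \<cdot>\<^sub>m commutator A C) $$ (i,j)"
    using assms ij comm_carrier[of A N C]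
    by (simp add: comm_entry[OF smult_carrier_mat[OF assms(1)] assms(2) ij] comm_entry[OF assms ij]
        sum_distrib_left algebra_simps)
qed (use assms comm_carrier[of A N C] comm_carrier[of "c \<cdot>\<^sub>m A" N C] in auto)

lemma comm_smult_right:
  assumes "A \<in> carrier_mat N N" "C \<in> carrier_mat N N"
  shows "commutator C (c \<cdot>\<^sub>m A) = c \<cdot>\<^sub>m commutator C A"
proof (rule eq_matI)
  fix i j assume "i < dim_row (c \<cdot>\<^sub>m commutator C A)" "j < dim_col (c \<cdot>\<^sub>m commutator C A)"
  then have ij: "i < N" "j < N" using assms comm_carrier[of C N A] by auto
  show "commutator C (c \<cdot>\<^sub>m A) $$ (i,j) = (c \<cdot>\<^sub>m commutator C A) $$ (i,j)"
    using assms ij comm_carrier[of C N A]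
    by (simp add: comm_entry[OF assms(2) smult_carrier_mat[OF assms(1)] ij] comm_entry[OF assms(2,1) ij]
        sum_distrib_left algebra_simps)
qed (use assms comm_carrier[of C N A] comm_carrier[of C N "c \<cdot>\<^sub>m A"] in auto)

lemma comm_zero_left: assumes "C \<in> carrier_mat N N" shows "commutator (0\<^sub>m N N) C = 0\<^sub>m N N"
proof -
  have z: "0\<^sub>m N N \<in> carrier_mat N N" by simp
  have c: "commutator (0\<^sub>m N N) C \<in> carrier_mat N N" by (rule comm_carrier[OF z assms])
  show ?thesis by (rule eq_matI) (use c in \<open>auto simp: comm_entry[OF z assms]\<close>)
qed

lemma comm_zero_right: assumes "C \<in> carrier_mat N N" shows "commutator C (0\<^sub>m N N) = 0\<^sub>m N N"
proof -
  have z: "0\<^sub>m N N \<in> carrier_mat N N" by simp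
  have c: "commutator C (0\<^sub>m N N) \<in> carrier_mat N N" by (rule comm_carrier[OF assms z])
  show ?thesis by (rule eq_matI) (use c in \<open>auto simp: comm_entry[OF assms z]\<close>)
qed

lemma span_carrier:
  "A \<in> real_span_mat N S \<Longrightarrow> S \<subseteq> carrier_mat N N \<Longrightarrow> A \<in> carrier_mat N N"
  by (induction rule: real_span_mat.induct) auto

lemma lie_carrier:
  "A \<in> lie_gen N S \<Longrightarrow> S \<subseteq> carrier_mat N N \<Longrightarrow> A \<in> carrier_mat N N"
  by (induction rule: lie_gen.induct) (auto simp: comm_carrier)

lemma span_comm:
  assumes S: "S \<subseteq> carrier_mat N N"
    and base: "\<And>x y. x \<in> S \<Longrightarrow> y \<in> S \<Longrightarrow> commutator x y \<in> real_span_mat N S"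
    and A: "A \<in> real_span_mat N S" and B: "B \<in> real_span_mat N S"
  shows "commutator A B \<in> real_span_mat N S"
proof -
  have one: "commutator x B \<in> real_span_mat N S" if x: "x \<in> S" and B: "B \<in> real_span_mat N S" for x B
    using B
  proof -
    have xc: "x \<in> carrier_mat N N" using x S by auto
    show ?thesis using B
  proof (induction rule: real_span_mat.induct)
    case zero
    have "x \<in> carrier_mat N N" using x S by auto
    then show ?case using comm_zero_right[of x N] by (auto intro: real_span_mat.zero)
  next
    case (gen A) then show ?case using x base by simp
  next
    case (add A B)
    then show ?case using comm_add_right[OF span_carrier[OF add.hyps(1) S] span_carrier[OF add.hyps(2) S] xc]
      by (auto intro: real_span_mat.add)
  next
    case (smult A c)
    then show ?case using comm_smult_right[OF span_carrier[OF smult.hyps(1) S] xc]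
      by (auto intro: real_span_mat.smult)
  qed
  qed
  show ?thesis using A
  proof (induction rule: real_span_mat.induct)
    case zero then show ?case using B S comm_zero_left[of B N] span_carrier[OF B S] by (auto intro: real_span_mat.zero)
  next
    case (gen A) then show ?case using one B by simp
  next
    case (add A1 A2)
    then show ?case using comm_add_left[of A1 N A2 B] span_carrier[OF B S] span_carrier[OF add.hyps(1) S] span_carrier[OF add.hyps(2) S]
      by (auto intro: real_span_mat.add)
  next
    case (smult A c)
    then show ?case using comm_smult_left[of A N B] span_carrier[OF B S] span_carrier[OF smult.hyps(1) S]
      by (auto intro: real_span_mat.smult)
  qed
qed

abbreviation SP :: "nat \<Rightarrow> complex mat set" where
  "SP n \<equiv> real_span_mat (2 ^ n) ((\<lambda>P. \<i> \<cdot>\<^sub>m pauli_mat P) ` targ n)"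

lemma targ_carrier: "(\<lambda>P. \<i> \<cdot>\<^sub>m pauli_mat P) ` targ n \<subseteq> carrier_mat (2^n) (2^n)"
proof
  fix x assume "x \<in> (\<lambda>P. \<i> \<cdot>\<^sub>m pauli_mat P) ` targ n"
  then obtain P where "P \<in> targ n" "x = \<i> \<cdot>\<^sub>m pauli_mat P" by blast
  moreover then have "length P = n" by (simp add: targ_def)
  ultimately show "x \<in> carrier_mat (2^n) (2^n)" using pauli_mat_carrier[of P] by simp
qed

lemma SP_comm: "A \<in> SP n \<Longrightarrow> B \<in> SP n \<Longrightarrow> commutator A B \<in> SP n"
proof (rule span_comm[OF targ_carrier])
  fix x y assume "x \<in> (\<lambda>P. \<i> \<cdot>\<^sub>m pauli_mat P) ` targ n" "y \<in> (\<lambda>P. \<i> \<cdot>\<^sub>m pauli_mat P) ` targ n"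
  then obtain P Q where PQ: "P \<in> targ n" "Q \<in> targ n" "x = \<i> \<cdot>\<^sub>m pauli_mat P" "y = \<i> \<cdot>\<^sub>m pauli_mat Q" by auto
  have l: "length P = n" "length Q = n" using PQ by (auto simp: targ_iff)
  show "commutator x y \<in> SP n"
  proof (cases "anti P Q")
    case True
    then have "pmul P Q \<in> targ n" using pmul_targ PQ by simp
    then have g: "\<i> \<cdot>\<^sub>m pauli_mat (pmul P Q) \<in> SP n" by (intro real_span_mat.gen) blast
    have e: "commutator x y = complex_of_real (-2 * Im (phs P Q)) \<cdot>\<^sub>m (\<i> \<cdot>\<^sub>m pauli_mat (pmul P Q))"
      using True commutator_pauli[OF l] PQ by simp
    show ?thesis unfolding e by (rule real_span_mat.smult[OF g])
  next
    case False
    then show ?thesis using commutator_pauli[OF l] PQ by (auto intro: real_span_mat.zero)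
  qed
qed

lemma two_site_len[simp]: "length (two_site n A B j) = n"
  by (simp add: two_site_def)

lemma two_site_nth: "k < n \<Longrightarrow> two_site n A B j ! k = (if k = j then A else if k = Suc j then B else PI)"
  by (simp add: two_site_def)

lemma gens_targ:
  assumes n: "n \<ge> 3" and j: "j + 1 < n" and AB: "(A, B) \<in> {(PX, PX), (PY, PY), (PY, PZ)}"
  shows "two_site n A B j \<in> targ n"
proof -
  have ne1: "two_site n A B j \<noteq> replicate n PI"
  proof
    assume "two_site n A B j = replicate n PI"
    then have "two_site n A B j ! j = PI" using j by simp
    then show False using AB j by (auto simp: two_site_nth)
  qed
  have ne2: "two_site n A B j \<noteq> replicate n PX"
  proof
    assume e: "two_site n A B j = replicate n PX"
    define k where "k = (if j = 0 then 2 else (0::nat))" have "k < n" "k \<noteq> j" "k \<noteq> Suc j" using n j by (auto simp: k_def)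
    then have "two_site n A B j ! k = PI" by (simp add: two_site_nth)
    then show False using e \<open>k < n\<close> by simp
  qed
  define f where "f = (\<lambda>k. if k = j then A else if k = Suc j then B else PI)"
  have app: "sg (xs @ [x]) = (sg xs \<noteq> sg1 x)" for xs x by (induction xs) auto
  have sgd: "sg (map f [0..<m]) = ((j < m \<and> sg1 A) \<noteq> (Suc j < m \<and> sg1 B))" for m
  proof (induction m)
    case 0 then show ?case by simp
  next
    case (Suc m)
    have "sg (map f [0..<Suc m]) = (sg (map f [0..<m]) \<noteq> sg1 (f m))" using app by simp
    moreover have "f m = (if m = j then A else if m = Suc j then B else PI)" by (simp add: f_def)
    ultimately show ?case using Suc.IH
    proof -
      assume h: "sg (map f [0..<Suc m]) = (sg (map f [0..<m]) \<noteq> sg1 (f m))"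
        "f m = (if m = j then A else if m = Suc j then B else PI)"
        "sg (map f [0..<m]) = ((j < m \<and> sg1 A) \<noteq> (Suc j < m \<and> sg1 B))"
      consider "m = j" | "m = Suc j" | "m \<noteq> j \<and> m \<noteq> Suc j" by blast
      then show ?thesis
      proof cases
        case 1 then show ?thesis using h by (simp add: sg1_def)
      next
        case 2 then show ?thesis using h by (simp add: sg1_def)
      next
        case 3 then show ?thesis using h by (simp add: sg1_def less_Suc_eq)
      qed
    qed
  qed
  have "two_site n A B j = map f [0..<n]" by (simp add: two_site_def f_def)
  then have "\<not> sg (two_site n A B j)" using sgd[of n] AB j by (auto simp: sg1_def)
  then show ?thesis using ne1 ne2 by (simp add: targ_iff)
qed

lemma a13_sub_SP: assumes "n \<ge> 3" shows "a13 n \<subseteq> SP n"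
proof
  fix A assume "A \<in> a13 n"
  then show "A \<in> SP n" unfolding a13_def
  proof (induction rule: lie_gen.induct)
    case zero then show ?case by (rule real_span_mat.zero)
  next
    case (gen A)
    then obtain P where "P \<in> targ n" "A = \<i> \<cdot>\<^sub>m pauli_mat P" using gens_targ[OF assms] by blast
    then show ?case by (auto intro: real_span_mat.gen)
  next
    case (add A B) show ?case by (rule real_span_mat.add[OF add.IH])
  next
    case (smult A c) show ?case by (rule real_span_mat.smult[OF smult.IH])
  next
    case (bracket A B) show ?case by (rule SP_comm[OF bracket.IH])
  qed
qed


definition Kset :: "nat \<Rightarrow> complex mat set" where
  "Kset N = {A \<in> carrier_mat N N.
     (\<forall>r<N. \<forall>c<N. A $$ (N-1-r, N-1-c) = A $$ (r,c)) \<and>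
     (\<forall>r<N. \<forall>c<N. cnj (A $$ (c,r)) = - A $$ (r,c)) \<and>
     (\<Sum>r<N. A $$ (r,r)) = 0 \<and> (\<Sum>r<N. A $$ (r, N-1-r)) = 0}"

lemma SP_sub_K: "SP n \<subseteq> Kset (2^n)"
proof
  fix A assume "A \<in> SP n"
  then show "A \<in> Kset (2^n)"
  proof (induction rule: real_span_mat.induct)
    case zero then show ?case by (simp add: Kset_def)
  next
    case (gen A)
    then obtain P where P: "P \<in> targ n" "A = \<i> \<cdot>\<^sub>m pauli_mat P" by blast
    have l: "length P = n" and ne: "P \<noteq> replicate n PI" "P \<noteq> replicate n PX" and s: "\<not> sg P"
      using P by (auto simp: targ_iff)
    have c: "A \<in> carrier_mat (2^n) (2^n)" using P l pauli_mat_carrier[of P] by simp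
    have f: "\<forall>r<2^n. \<forall>c<2^n. A $$ (2^n-1-r, 2^n-1-c) = A $$ (r,c)"
      using pauli_mat_flip[of _ P] s l P by simp
    have h: "\<forall>r<2^n. \<forall>c<2^n. cnj (A $$ (c,r)) = - A $$ (r,c)"
      using pauli_mat_herm[of _ P] l P by simp
    have t: "(\<Sum>r<2^n. A $$ (r,r)) = 0"
    proof -
      have "(\<Sum>r<2^n. A $$ (r,r)) = (\<Sum>r<2^n. \<i> * pauli_mat P $$ (r,r))"
        by (rule sum.cong) (use P l in auto)
      also have "\<dots> = \<i> * (\<Sum>r<2^n. pauli_mat P $$ (r,r))" by (simp add: sum_distrib_left)
      also have "\<dots> = 0" using trace_pauli[of P] ne l by simp
      finally show ?thesis .
    qed
    have t2: "(\<Sum>r<2^n. A $$ (r,2^n-1-r)) = 0"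
    proof -
      have "(\<Sum>r<2^n. A $$ (r,2^n-1-r)) = (\<Sum>r<2^n. \<i> * pauli_mat P $$ (r,2^n-1-r))"
        by (rule sum.cong) (use P l in auto)
      also have "\<dots> = \<i> * (\<Sum>r<2^n. pauli_mat P $$ (r,2^n-1-r))" by (simp add: sum_distrib_left)
      also have "\<dots> = 0" using antitrace_pauli[of P] ne l by simp
      finally show ?thesis .
    qed
    show ?case using c f h t t2 by (simp add: Kset_def)
  next
    case (add A B)
    then show ?case by (auto simp: Kset_def sum.distrib)
  next
    case (smult A c)
    then have "A \<in> carrier_mat (2^n) (2^n)" by (simp add: Kset_def)
    then show ?case using smult by (auto simp: Kset_def sum_distrib_left[symmetric])
  qed
qed


definition Ln :: "nat \<Rightarrow> pauli list set" where "Ln n = {P. length P = n}"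

lemma finite_Ln: "finite (Ln n)"
  using finite_lists_length_eq[of "UNIV::pauli set" n] by (simp add: Ln_def)

lemma Ln_Suc: "Ln (Suc n) = (\<lambda>(a,P). a#P) ` (UNIV \<times> Ln n)"
  unfolding Ln_def by (auto simp: length_Suc_conv image_iff)

lemma sum_Ln_Suc: "(\<Sum>Q\<in>Ln (Suc n). g Q) = (\<Sum>a\<in>UNIV. \<Sum>P\<in>Ln n. g (a#P))"
proof -
  have "inj_on (\<lambda>(a,P). a#P) (UNIV \<times> Ln n)" by (auto simp: inj_on_def)
  then have "(\<Sum>Q\<in>Ln (Suc n). g Q) = (\<Sum>x\<in>UNIV \<times> Ln n. g ((\<lambda>(a,P). a#P) x))"
    unfolding Ln_Suc using sum.reindex[OF \<open>inj_on _ _\<close>, of g] by (simp add: comp_def)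
  also have "\<dots> = (\<Sum>a\<in>UNIV. \<Sum>P\<in>Ln n. g (a#P))"
    by (simp add: sum.cartesian_product prod.case_distrib)
  finally show ?thesis .
qed

lemma pauli_complete1:
  assumes "l < 2" "k < 2" "r < 2" "c < 2"
  shows "(\<Sum>a\<in>UNIV. pauli_entry a l k * pauli_entry a r c) = (if l = c \<and> k = r then 2 else 0)"
  using less2[OF assms(1)] less2[OF assms(2)] less2[OF assms(3)] less2[OF assms(4)]
  by (auto simp: UNIV_pauli)

lemma pauli_complete:
  "l < 2^n \<Longrightarrow> k < 2^n \<Longrightarrow> r < 2^n \<Longrightarrow> c < 2^n \<Longrightarrow>
   (\<Sum>P\<in>Ln n. pauli_mat P $$ (l,k) * pauli_mat P $$ (r,c)) = (if l = c \<and> k = r then 2^n else 0)"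
proof (induction n arbitrary: l k r c)
  case 0 then show ?case by (simp add: Ln_def pauli_mat_Nil)
next
  case (Suc n)
  define N where "N = (2::nat)^n"
  have N0: "N > 0" by (simp add: N_def)
  have b: "l < 2*N" "k < 2*N" "r < 2*N" "c < 2*N" using Suc.prems by (simp_all add: N_def)
  have "(\<Sum>P\<in>Ln (Suc n). pauli_mat P $$ (l,k) * pauli_mat P $$ (r,c)) =
     (\<Sum>a\<in>UNIV. \<Sum>P\<in>Ln n. pauli_mat (a#P) $$ (l,k) * pauli_mat (a#P) $$ (r,c))"
    by (rule sum_Ln_Suc)
  also have "\<dots> = (\<Sum>a\<in>UNIV. \<Sum>P\<in>Ln n. (pauli_entry a (l div N) (k div N) * pauli_entry a (r div N) (c div N)) *
       (pauli_mat P $$ (l mod N, k mod N) * pauli_mat P $$ (r mod N, c mod N)))"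
  proof (intro sum.cong refl)
    fix a P assume "P \<in> Ln n"
    then have "length P = n" by (simp add: Ln_def)
    then show "pauli_mat (a#P) $$ (l,k) * pauli_mat (a#P) $$ (r,c) =
      (pauli_entry a (l div N) (k div N) * pauli_entry a (r div N) (c div N)) *
       (pauli_mat P $$ (l mod N, k mod N) * pauli_mat P $$ (r mod N, c mod N))"
      using b by (simp add: pauli_mat_Cons N_def)
  qed
  also have "\<dots> = (\<Sum>a\<in>UNIV. pauli_entry a (l div N) (k div N) * pauli_entry a (r div N) (c div N)) *
      (\<Sum>P\<in>Ln n. pauli_mat P $$ (l mod N, k mod N) * pauli_mat P $$ (r mod N, c mod N))"
    by (simp add: sum_product)
  also have "\<dots> = (if l div N = c div N \<and> k div N = r div N then 2 else 0) *
      (if l mod N = c mod N \<and> k mod N = r mod N then of_nat N else 0)"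
    using pauli_complete1[OF div_lt2[OF b(1)] div_lt2[OF b(2)] div_lt2[OF b(3)] div_lt2[OF b(4)]]
      Suc.IH[of "l mod N" "k mod N" "r mod N" "c mod N"] N0 by (simp add: N_def)
  also have "\<dots> = (if l = c \<and> k = r then 2^Suc n else 0)"
    using eq_divmod[OF N0, of l c] eq_divmod[OF N0, of k r] by (auto simp: N_def)
  finally show ?case .
qed

lemma span_fin:
  assumes "finite F" "F \<subseteq> targ n"
  shows "mat (2^n) (2^n) (\<lambda>(r,c). \<Sum>P\<in>F. complex_of_real (t P) * (\<i> * pauli_mat P $$ (r,c))) \<in> SP n"
  using assms
proof (induction F rule: finite_induct)
  case empty
  have e: "mat (2^n) (2^n) (\<lambda>(r,c). \<Sum>P\<in>{}. complex_of_real (t P) * (\<i> * pauli_mat P $$ (r,c))) = 0\<^sub>m (2^n) (2^n)"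
    by (rule eq_matI) auto
  show ?case unfolding e by (rule real_span_mat.zero)
next
  case (insert x F)
  have x: "x \<in> targ n" and F: "F \<subseteq> targ n" using insert.prems by auto
  have lx: "length x = n" using x by (simp add: targ_iff)
  have g: "\<i> \<cdot>\<^sub>m pauli_mat x \<in> SP n" using x by (intro real_span_mat.gen) blast
  have "mat (2^n) (2^n) (\<lambda>(r,c). \<Sum>P\<in>insert x F. complex_of_real (t P) * (\<i> * pauli_mat P $$ (r,c))) =
      mat (2^n) (2^n) (\<lambda>(r,c). \<Sum>P\<in>F. complex_of_real (t P) * (\<i> * pauli_mat P $$ (r,c))) +
      complex_of_real (t x) \<cdot>\<^sub>m (\<i> \<cdot>\<^sub>m pauli_mat x)"
    by (rule eq_matI) (use insert.hyps lx in auto)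
  note eq = this
  show ?case unfolding eq by (rule real_span_mat.add[OF insert.IH[OF F] real_span_mat.smult[OF g]])
qed

lemma nat_compl_reindex: "(\<Sum>i<N. g (N - 1 - i)) = (\<Sum>i<(N::nat). (g i :: complex))"
  using sum.nat_diff_reindex[of g N] by simp

lemma sum_ifmul: "c < (N::nat) \<Longrightarrow> (\<Sum>l<N. (if l = c then a else 0) * f l) = (a * f c :: complex)"
proof -
  assume c: "c < N"
  have "(\<Sum>l<N. (if l = c then a else 0) * f l) = (\<Sum>l<N. if l = c then a * f l else 0)"
    by (rule sum.cong) auto
  also have "\<dots> = a * f c" using c by (simp add: sum.delta)
  finally show ?thesis .
qed

lemma K_sub_SP: "Kset (2^n) \<subseteq> SP n"
proof
  fix A assume AK: "A \<in> Kset (2^n)"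
  define N where "N = (2::nat)^n"
  have N0: "N > 0" by (simp add: N_def)
  have Ac: "A \<in> carrier_mat N N" and Af: "\<And>r c. r < N \<Longrightarrow> c < N \<Longrightarrow> A $$ (N-1-r, N-1-c) = A $$ (r,c)"
    and Ah: "\<And>r c. r < N \<Longrightarrow> c < N \<Longrightarrow> cnj (A $$ (c,r)) = - A $$ (r,c)"
    and At: "(\<Sum>r<N. A $$ (r,r)) = 0" and At2: "(\<Sum>r<N. A $$ (r, N-1-r)) = 0"
    using AK by (auto simp: Kset_def N_def)
  define tr where "tr P = (\<Sum>k<N. \<Sum>l<N. pauli_mat P $$ (l,k) * A $$ (k,l))" for P
  have exp: "(\<Sum>P\<in>Ln n. tr P * pauli_mat P $$ (r,c)) = of_nat N * A $$ (r,c)" if rc: "r < N" "c < N" for r c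
  proof -
    have "(\<Sum>P\<in>Ln n. tr P * pauli_mat P $$ (r,c)) =
        (\<Sum>P\<in>Ln n. \<Sum>k<N. \<Sum>l<N. pauli_mat P $$ (l,k) * pauli_mat P $$ (r,c) * A $$ (k,l))"
      by (simp add: tr_def sum_distrib_left sum_distrib_right mult_ac)
    also have "\<dots> = (\<Sum>k<N. \<Sum>P\<in>Ln n. \<Sum>l<N. pauli_mat P $$ (l,k) * pauli_mat P $$ (r,c) * A $$ (k,l))"
      by (rule sum.swap)
    also have "\<dots> = (\<Sum>k<N. \<Sum>l<N. \<Sum>P\<in>Ln n. pauli_mat P $$ (l,k) * pauli_mat P $$ (r,c) * A $$ (k,l))"
      by (rule sum.cong[OF refl], rule sum.swap)
    also have "\<dots> = (\<Sum>k<N. \<Sum>l<N. (\<Sum>P\<in>Ln n. pauli_mat P $$ (l,k) * pauli_mat P $$ (r,c)) * A $$ (k,l))"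
      by (simp add: sum_distrib_right)
    also have "\<dots> = (\<Sum>k<N. \<Sum>l<N. (if l = c \<and> k = r then of_nat N else 0) * A $$ (k,l))"
      by (intro sum.cong refl) (use rc in \<open>simp add: pauli_complete N_def\<close>)
    also have "\<dots> = (\<Sum>k<N. if k = r then of_nat N * A $$ (k,c) else 0)"
    proof (intro sum.cong refl)
      fix k
      show "(\<Sum>l<N. (if l = c \<and> k = r then of_nat N else 0) * A $$ (k,l)) = (if k = r then of_nat N * A $$ (k,c) else 0)"
      proof (cases "k = r")
        case True then show ?thesis using sum_ifmul[OF rc(2), of "of_nat N" "\<lambda>l. A $$ (k,l)"] by simp
      next
        case False then show ?thesis by simp
      qed
    qed
    also have "\<dots> = of_nat N * A $$ (r,c)" using rc by (simp add: sum.delta)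
    finally show ?thesis .
  qed
  have zero: "tr P = 0" if P: "P \<in> Ln n" "P \<notin> targ n" for P
  proof -
    have l: "length P = n" using P by (simp add: Ln_def)
    consider "P = replicate n PI" | "P = replicate n PX" | "sg P" using P l by (auto simp: targ_iff)
    then show ?thesis
    proof cases
      case 1
      have "tr P = (\<Sum>k<N. \<Sum>l<N. (if l = k then A $$ (k,l) else 0))"
        unfolding tr_def 1 pauli_mat_I N_def[symmetric] by (intro sum.cong refl) auto
      also have "\<dots> = (\<Sum>k<N. A $$ (k,k))" by (simp add: sum.delta)
      finally show ?thesis using At by simp
    next
      case 2
      have "tr P = (\<Sum>k<N. \<Sum>l<N. (if k = N - 1 - l then A $$ (k,l) else 0))"
        unfolding tr_def 2 by (intro sum.cong refl) (auto simp: pauli_mat_X N_def)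
      also have "\<dots> = (\<Sum>l<N. \<Sum>k<N. (if k = N - 1 - l then A $$ (k,l) else 0))"
        by (rule sum.swap)
      also have "\<dots> = (\<Sum>l<N. A $$ (N - 1 - l, l))"
        by (intro sum.cong refl) (simp add: sum.delta)
      also have "\<dots> = (\<Sum>l<N. A $$ (N - 1 - (N - 1 - l), N - 1 - l))"
        by (rule nat_compl_reindex[symmetric])
      also have "\<dots> = (\<Sum>l<N. A $$ (l, N - 1 - l))"
        by (intro sum.cong refl) auto
      finally show ?thesis using At2 by simp
    next
      case 3
      have "tr P = (\<Sum>k<N. \<Sum>l<N. pauli_mat P $$ (N-1-l, N-1-k) * A $$ (N-1-k, N-1-l))"
        unfolding tr_def
        by (subst nat_compl_reindex[symmetric], rule sum.cong[OF refl], subst nat_compl_reindex[symmetric], rule refl)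
      also have "\<dots> = (\<Sum>k<N. \<Sum>l<N. - (pauli_mat P $$ (l,k) * A $$ (k,l)))"
      proof (intro sum.cong refl)
        fix k l assume k: "k \<in> {..<N}" and l': "l \<in> {..<N}"
        have e1: "pauli_mat P $$ (N-1-l, N-1-k) = - pauli_mat P $$ (l,k)"
          using pauli_mat_flip[of l P k] 3 l k l' by (simp add: N_def)
        have e2: "A $$ (N-1-k, N-1-l) = A $$ (k,l)" using Af k l' by simp
        show "pauli_mat P $$ (N-1-l, N-1-k) * A $$ (N-1-k, N-1-l) = - (pauli_mat P $$ (l,k) * A $$ (k,l))"
          unfolding e1 e2 by simp
      qed
      also have "\<dots> = - tr P" by (simp add: tr_def sum_negf)
      finally show ?thesis by simp
    qed
  qed
  have imag: "tr P = \<i> * complex_of_real (Im (tr P))" if P: "P \<in> targ n" for P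
  proof -
    have l: "length P = n" using P by (simp add: targ_iff)
    have "cnj (tr P) = (\<Sum>k<N. \<Sum>l<N. pauli_mat P $$ (k,l) * (- A $$ (l,k)))"
      unfolding tr_def by (simp add: pauli_mat_herm l N_def[symmetric] Ah)
    also have "\<dots> = - (\<Sum>l<N. \<Sum>k<N. pauli_mat P $$ (k,l) * A $$ (l,k))"
      by (subst sum.swap) (simp add: sum_negf)
    also have "\<dots> = - tr P" by (simp add: tr_def)
    finally have "cnj (tr P) = - tr P" .
    then have "Re (cnj (tr P)) = Re (- tr P)" by simp
    then have "Re (tr P) = 0" by simp
    then show ?thesis by (simp add: complex_eq_iff)
  qed
  have sub: "targ n \<subseteq> Ln n" by (auto simp: targ_iff Ln_def)
  have fin: "finite (targ n)" using finite_subset[OF sub finite_Ln] .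
  define t where "t P = Im (tr P) / real N" for P
  have "A = mat N N (\<lambda>(r,c). \<Sum>P\<in>targ n. complex_of_real (t P) * (\<i> * pauli_mat P $$ (r,c)))"
  proof (rule eq_matI)
    fix r c assume "r < dim_row (mat N N (\<lambda>(r,c). \<Sum>P\<in>targ n. complex_of_real (t P) * (\<i> * pauli_mat P $$ (r,c))))"
      "c < dim_col (mat N N (\<lambda>(r,c). \<Sum>P\<in>targ n. complex_of_real (t P) * (\<i> * pauli_mat P $$ (r,c))))"
    then have rc: "r < N" "c < N" by auto
    have "(\<Sum>P\<in>targ n. complex_of_real (t P) * (\<i> * pauli_mat P $$ (r,c))) =
        (\<Sum>P\<in>targ n. tr P * pauli_mat P $$ (r,c)) / of_nat N"
      by (simp add: sum_divide_distrib t_def) (intro sum.cong refl, subst imag, auto)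
    also have "(\<Sum>P\<in>targ n. tr P * pauli_mat P $$ (r,c)) = (\<Sum>P\<in>Ln n. tr P * pauli_mat P $$ (r,c))"
      by (rule sum.mono_neutral_left[OF finite_Ln sub]) (auto simp: zero)
    also have "\<dots> / of_nat N = A $$ (r,c)" using exp[OF rc] N0 by simp
    finally show "A $$ (r,c) = mat N N (\<lambda>(r,c). \<Sum>P\<in>targ n. complex_of_real (t P) * (\<i> * pauli_mat P $$ (r,c))) $$ (r,c)"
      using rc by simp
  qed (use Ac in auto)
  then show "A \<in> SP n" using span_fin[OF fin subset_refl, of t] by (simp add: N_def)
qed


definition f1 :: "nat \<Rightarrow> complex mat \<Rightarrow> complex mat" where
  "f1 h A = mat h h (\<lambda>(r,c). A $$ (r,c) + A $$ (r, 2*h-1-c))"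
definition f2 :: "nat \<Rightarrow> complex mat \<Rightarrow> complex mat" where
  "f2 h A = mat h h (\<lambda>(r,c). A $$ (r,c) - A $$ (r, 2*h-1-c))"

lemma sum_halves: "(\<Sum>k<2*(h::nat). g k) = (\<Sum>k<h. g k) + (\<Sum>k<h. (g (2*h-1-k) :: complex))"
proof -
  have "(\<Sum>k<2*h. g k) = (\<Sum>k<h. g k) + (\<Sum>k<h. g (h + k))" by (rule sum_split2)
  also have "(\<Sum>k<h. g (h + k)) = (\<Sum>k<h. g (h + (h - 1 - k)))"
    using sum.nat_diff_reindex[of "\<lambda>k. g (h + k)" h] by simp
  also have "\<dots> = (\<Sum>k<h. g (2*h-1-k))" by (intro sum.cong refl) (auto simp: mult_2)
  finally show ?thesis .
qed

lemma prod_fold: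
  fixes A B :: "complex mat"
  assumes A: "A \<in> carrier_mat (2*h) (2*h)" and B: "B \<in> carrier_mat (2*h) (2*h)"
    and Bf: "\<And>r c. r < 2*h \<Longrightarrow> c < 2*h \<Longrightarrow> B $$ (2*h-1-r, 2*h-1-c) = B $$ (r,c)"
    and r: "r < 2*h" and c: "c < 2*h" and s: "s = 1 \<or> s = -1"
  shows "(A * B) $$ (r,c) + s * (A * B) $$ (r, 2*h-1-c) =
     (\<Sum>k<h. (A $$ (r,k) + s * A $$ (r, 2*h-1-k)) * (B $$ (k,c) + s * B $$ (k, 2*h-1-c)))"
proof -
  let ?N = "2*h"
  have c': "2*h-1-c < 2*h" using c by simp
  have "(A * B) $$ (r,c) + s * (A * B) $$ (r, 2*h-1-c) =
     (\<Sum>k<?N. A $$ (r,k) * (B $$ (k,c) + s * B $$ (k, 2*h-1-c)))"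
  proof -
    have m1: "(A*B) $$ (r,c) = (\<Sum>k<?N. A $$ (r,k) * B $$ (k,c))" by (rule mult_entry[OF A B r c])
    have m2: "(A*B) $$ (r,2*h-1-c) = (\<Sum>k<?N. A $$ (r,k) * B $$ (k,2*h-1-c))" by (rule mult_entry[OF A B r c'])
    show ?thesis unfolding m1 m2 sum_distrib_left sum.distrib[symmetric] by (intro sum.cong refl) (simp add: algebra_simps)
  qed
  also have "\<dots> = (\<Sum>k<h. A $$ (r,k) * (B $$ (k,c) + s * B $$ (k, 2*h-1-c))) +
      (\<Sum>k<h. A $$ (r,2*h-1-k) * (B $$ (2*h-1-k,c) + s * B $$ (2*h-1-k, 2*h-1-c)))"
    using sum_halves[where g="\<lambda>k. A $$ (r,k) * (B $$ (k,c) + s * B $$ (k, 2*h-1-c))"] by simp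
  also have "(\<Sum>k<h. A $$ (r,2*h-1-k) * (B $$ (2*h-1-k,c) + s * B $$ (2*h-1-k, 2*h-1-c))) =
      (\<Sum>k<h. s * A $$ (r,2*h-1-k) * (B $$ (k,c) + s * B $$ (k, 2*h-1-c)))"
  proof (intro sum.cong refl)
    fix k assume k: "k \<in> {..<h}"
    have e1: "B $$ (2*h-1-k, c) = B $$ (k, 2*h-1-c)" using Bf[of k "2*h-1-c"] k c by auto
    have e2: "B $$ (2*h-1-k, 2*h-1-c) = B $$ (k, c)" using Bf[of k c] k c by auto
    have ss: "s * s = 1" using s by auto
    show "A $$ (r,2*h-1-k) * (B $$ (2*h-1-k,c) + s * B $$ (2*h-1-k, 2*h-1-c)) =
      s * A $$ (r,2*h-1-k) * (B $$ (k,c) + s * B $$ (k, 2*h-1-c))"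
      unfolding e1 e2 using ss by (simp add: algebra_simps)
  qed
  also have "(\<Sum>k<h. A $$ (r,k) * (B $$ (k,c) + s * B $$ (k, 2*h-1-c))) +
      (\<Sum>k<h. s * A $$ (r,2*h-1-k) * (B $$ (k,c) + s * B $$ (k, 2*h-1-c))) =
      (\<Sum>k<h. (A $$ (r,k) + s * A $$ (r, 2*h-1-k)) * (B $$ (k,c) + s * B $$ (k, 2*h-1-c)))"
    by (simp add: sum.distrib[symmetric] algebra_simps)
  finally show ?thesis .
qed

definition fs :: "nat \<Rightarrow> complex \<Rightarrow> complex mat \<Rightarrow> complex mat" where
  "fs h s A = mat h h (\<lambda>(r,c). A $$ (r,c) + s * A $$ (r, 2*h-1-c))"

lemma fs_carrier: "fs h s A \<in> carrier_mat h h" by (simp add: fs_def)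

lemma fs_index: "r < h \<Longrightarrow> c < h \<Longrightarrow> fs h s A $$ (r,c) = A $$ (r,c) + s * A $$ (r, 2*h-1-c)"
  by (simp add: fs_def)

lemma K_props:
  assumes "A \<in> Kset (2*h)"
  shows "A \<in> carrier_mat (2*h) (2*h)"
    "\<And>r c. r < 2*h \<Longrightarrow> c < 2*h \<Longrightarrow> A $$ (2*h-1-r, 2*h-1-c) = A $$ (r,c)"
    "\<And>r c. r < 2*h \<Longrightarrow> c < 2*h \<Longrightarrow> cnj (A $$ (c,r)) = - A $$ (r,c)"
    "(\<Sum>r<2*h. A $$ (r,r)) = 0" "(\<Sum>r<2*h. A $$ (r, 2*h-1-r)) = 0"
  using assms by (auto simp: Kset_def)

lemma half_traces:
  assumes "A \<in> Kset (2*h)"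
  shows "(\<Sum>r<h. A $$ (r,r)) = 0" "(\<Sum>r<h. A $$ (r, 2*h-1-r)) = 0"
proof -
  have "0 = (\<Sum>r<2*h. A $$ (r,r))" using K_props(4)[OF assms] by simp
  also have "\<dots> = (\<Sum>r<h. A $$ (r,r)) + (\<Sum>r<h. A $$ (2*h-1-r,2*h-1-r))" by (rule sum_halves)
  also have "(\<Sum>r<h. A $$ (2*h-1-r,2*h-1-r)) = (\<Sum>r<h. A $$ (r,r))"
    by (intro sum.cong refl) (use K_props(2)[OF assms] in auto)
  finally show "(\<Sum>r<h. A $$ (r,r)) = 0" by simp
  have "0 = (\<Sum>r<2*h. A $$ (r,2*h-1-r))" using K_props(5)[OF assms] by simp
  also have "\<dots> = (\<Sum>r<h. A $$ (r,2*h-1-r)) + (\<Sum>r<h. A $$ (2*h-1-r, 2*h-1-(2*h-1-r)))"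
    using sum_halves[where g="\<lambda>r. A $$ (r, 2*h-1-r)"] by simp
  also have "(\<Sum>r<h. A $$ (2*h-1-r, 2*h-1-(2*h-1-r))) = (\<Sum>r<h. A $$ (r,2*h-1-r))"
  proof (intro sum.cong refl)
    fix r assume "r \<in> {..<h}"
    then have r: "r < 2*h" "2*h-1-(2*h-1-r) = r" by auto
    show "A $$ (2*h-1-r, 2*h-1-(2*h-1-r)) = A $$ (r,2*h-1-r)"
      unfolding r(2) using K_props(2)[OF assms r(1), of "2*h-1-r"] r by simp
  qed
  finally show "(\<Sum>r<h. A $$ (r, 2*h-1-r)) = 0" by simp
qed

lemma fs_su:
  assumes A: "A \<in> Kset (2*h)" and s: "s = 1 \<or> s = -1"
  shows "fs h s A \<in> su h"
proof -
  have cs: "cnj s = s" using s by auto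
  have ct: "conj_transpose (fs h s A) = - fs h s A"
  proof (rule eq_matI)
    fix i j assume "i < dim_row (- fs h s A)" "j < dim_col (- fs h s A)"
    then have ij: "i < h" "j < h" by (auto simp: fs_def)
    have e: "A $$ (2*h-1-i, j) = A $$ (i, 2*h-1-j)"
      using K_props(2)[OF A, of i "2*h-1-j"] ij by simp
    show "conj_transpose (fs h s A) $$ (i,j) = (- fs h s A) $$ (i,j)"
      using ij K_props(3)[OF A, of i j] K_props(3)[OF A, of "2*h-1-i" j] e cs
      by (simp add: conj_transpose_def fs_def)
  qed (auto simp: conj_transpose_def fs_def)
  have tr: "mat_trace (fs h s A) = 0"
  proof -
    have "mat_trace (fs h s A) = (\<Sum>r<h. A $$ (r,r) + s * A $$ (r, 2*h-1-r))"
      by (simp add: mat_trace_def fs_def)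
    also have "\<dots> = (\<Sum>r<h. A $$ (r,r)) + s * (\<Sum>r<h. A $$ (r, 2*h-1-r))"
      by (simp add: sum.distrib sum_distrib_left)
    also have "\<dots> = 0" using half_traces[OF A] by simp
    finally show ?thesis .
  qed
  show ?thesis using ct tr fs_carrier by (simp add: su_def)
qed

lemma fs_add: "A \<in> carrier_mat (2*h) (2*h) \<Longrightarrow> B \<in> carrier_mat (2*h) (2*h) \<Longrightarrow>
  fs h s (A + B) = fs h s A + fs h s B"
  by (rule eq_matI) (auto simp: fs_def algebra_simps)

lemma fs_smult: "A \<in> carrier_mat (2*h) (2*h) \<Longrightarrow> fs h s (c \<cdot>\<^sub>m A) = c \<cdot>\<^sub>m fs h s A"
  by (rule eq_matI) (auto simp: fs_def algebra_simps)

lemma fs_mult: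
  assumes A: "A \<in> Kset (2*h)" and B: "B \<in> Kset (2*h)" and s: "s = 1 \<or> s = -1"
  shows "fs h s (A * B) = fs h s A * fs h s B"
proof (rule eq_matI)
  fix r c assume "r < dim_row (fs h s A * fs h s B)" "c < dim_col (fs h s A * fs h s B)"
  then have rc: "r < h" "c < h" by (auto simp: fs_def)
  have rc2: "r < 2*h" "c < 2*h" using rc by auto
  have "fs h s (A * B) $$ (r,c) = (A * B) $$ (r,c) + s * (A * B) $$ (r, 2*h-1-c)"
    using rc by (simp add: fs_def)
  also have "\<dots> = (\<Sum>k<h. (A $$ (r,k) + s * A $$ (r, 2*h-1-k)) * (B $$ (k,c) + s * B $$ (k, 2*h-1-c)))"
    by (rule prod_fold[OF K_props(1)[OF A] K_props(1)[OF B] K_props(2)[OF B] rc2 s])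
  also have "\<dots> = (\<Sum>k<h. fs h s A $$ (r,k) * fs h s B $$ (k,c))"
    by (intro sum.cong refl) (use rc in \<open>simp add: fs_def\<close>)
  also have "\<dots> = (fs h s A * fs h s B) $$ (r,c)"
    by (rule mult_entry[OF fs_carrier fs_carrier rc, symmetric])
  finally show "fs h s (A * B) $$ (r,c) = (fs h s A * fs h s B) $$ (r,c)" .
qed (auto simp: fs_def)

lemma fs_comm:
  assumes A: "A \<in> Kset (2*h)" and B: "B \<in> Kset (2*h)" and s: "s = 1 \<or> s = -1"
  shows "fs h s (commutator A B) = commutator (fs h s A) (fs h s B)"
proof (rule eq_matI)
  fix r c assume "r < dim_row (commutator (fs h s A) (fs h s B))" "c < dim_col (commutator (fs h s A) (fs h s B))"
  then have rc: "r < h" "c < h" by (auto simp: fs_def commutator_def)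
  have "fs h s (commutator A B) $$ (r,c) = fs h s (A * B) $$ (r,c) - fs h s (B * A) $$ (r,c)"
    using rc K_props(1)[OF A] K_props(1)[OF B] by (simp add: fs_def commutator_def algebra_simps)
  also have "\<dots> = commutator (fs h s A) (fs h s B) $$ (r,c)"
    unfolding fs_mult[OF A B s] fs_mult[OF B A s] using rc by (simp add: commutator_def fs_def)
  finally show "fs h s (commutator A B) $$ (r,c) = commutator (fs h s A) (fs h s B) $$ (r,c)" .
qed (auto simp: fs_def commutator_def)

definition recon :: "nat \<Rightarrow> complex mat \<Rightarrow> complex mat \<Rightarrow> complex mat" where
  "recon h B C = mat (2*h) (2*h) (\<lambda>(r,c).
    if r < h then (if c < h then (B $$ (r,c) + C $$ (r,c)) / 2 else (B $$ (r,2*h-1-c) - C $$ (r,2*h-1-c)) / 2)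
    else (if c < h then (B $$ (2*h-1-r,c) - C $$ (2*h-1-r,c)) / 2
          else (B $$ (2*h-1-r,2*h-1-c) + C $$ (2*h-1-r,2*h-1-c)) / 2))"

lemma recon_fs:
  assumes A: "A \<in> Kset (2*h)"
  shows "recon h (fs h 1 A) (fs h (-1) A) = A"
proof (rule eq_matI)
  fix r c assume "r < dim_row A" "c < dim_col A"
  then have rc: "r < 2*h" "c < 2*h" using K_props(1)[OF A] by auto
  have f: "A $$ (2*h-1-r, 2*h-1-c) = A $$ (r,c)" by (rule K_props(2)[OF A rc])
  have f2: "A $$ (2*h-1-r, c) = A $$ (r, 2*h-1-c)" using K_props(2)[OF A rc(1), of "2*h-1-c"] rc by simp
  show "recon h (fs h 1 A) (fs h (-1) A) $$ (r,c) = A $$ (r,c)"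
    using rc f f2 by (auto simp: recon_def fs_def)
qed (use K_props(1)[OF A] in \<open>auto simp: recon_def\<close>)

lemma fs_recon:
  assumes B: "B \<in> carrier_mat h h" and C: "C \<in> carrier_mat h h"
  shows "fs h 1 (recon h B C) = B" "fs h (-1) (recon h B C) = C"
proof -
  show "fs h 1 (recon h B C) = B"
  proof (rule eq_matI)
    fix r c assume "r < dim_row B" "c < dim_col B"
    then have rc: "r < h" "c < h" using B by auto
    have e: "\<not> (2*h-1-c < h)" "2*h-1-(2*h-1-c) = c" "2*h-1-c < 2*h" using rc by auto
    show "fs h 1 (recon h B C) $$ (r,c) = B $$ (r,c)"
      using rc e by (simp add: fs_def recon_def field_simps)
  qed (use B in \<open>auto simp: fs_def\<close>)
  show "fs h (-1) (recon h B C) = C"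
  proof (rule eq_matI)
    fix r c assume "r < dim_row C" "c < dim_col C"
    then have rc: "r < h" "c < h" using C by auto
    have e: "\<not> (2*h-1-c < h)" "2*h-1-(2*h-1-c) = c" "2*h-1-c < 2*h" using rc by auto
    show "fs h (-1) (recon h B C) $$ (r,c) = C $$ (r,c)"
      using rc e by (simp add: fs_def recon_def field_simps)
  qed (use C in \<open>auto simp: fs_def\<close>)
qed

lemma su_props:
  assumes "B \<in> su h"
  shows "B \<in> carrier_mat h h" "\<And>r c. r < h \<Longrightarrow> c < h \<Longrightarrow> cnj (B $$ (c,r)) = - B $$ (r,c)"
    "(\<Sum>r<h. B $$ (r,r)) = 0"
proof -
  show Bc: "B \<in> carrier_mat h h" using assms by (simp add: su_def)
  have ct: "conj_transpose B = - B" using assms by (simp add: su_def)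
  show "cnj (B $$ (c,r)) = - B $$ (r,c)" if "r < h" "c < h" for r c
  proof -
    have "conj_transpose B $$ (r,c) = (- B) $$ (r,c)" using ct by simp
    then show ?thesis using that Bc by (simp add: conj_transpose_def)
  qed
  show "(\<Sum>r<h. B $$ (r,r)) = 0" using assms Bc by (simp add: su_def mat_trace_def)
qed

lemma recon_K:
  assumes B: "B \<in> su h" and C: "C \<in> su h"
  shows "recon h B C \<in> Kset (2*h)"
proof -
  note Bp = su_props[OF B] and Cp = su_props[OF C]
  let ?R = "recon h B C"
  have c: "?R \<in> carrier_mat (2*h) (2*h)" by (simp add: recon_def)
  have fl: "\<forall>r<2*h. \<forall>c<2*h. ?R $$ (2*h-1-r, 2*h-1-c) = ?R $$ (r,c)"
    by (auto simp: recon_def)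
  have he: "\<forall>r<2*h. \<forall>c<2*h. cnj (?R $$ (c,r)) = - ?R $$ (r,c)"
  proof (intro allI impI)
    fix r c assume rc: "r < 2*h" "c < 2*h"
    consider "r < h" "c < h" | "r < h" "\<not> c < h" | "\<not> r < h" "c < h" | "\<not> r < h" "\<not> c < h" by blast
    then show "cnj (?R $$ (c,r)) = - ?R $$ (r,c)"
    proof cases
      case 1 then show ?thesis using rc Bp(2)[of r c] Cp(2)[of r c] by (simp add: recon_def field_simps)
    next
      case 2 then show ?thesis using rc Bp(2)[of r "2*h-1-c"] Cp(2)[of r "2*h-1-c"] by (simp add: recon_def field_simps)
    next
      case 3 then show ?thesis using rc Bp(2)[of "2*h-1-r" c] Cp(2)[of "2*h-1-r" c] by (simp add: recon_def field_simps)
    next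
      case 4 then show ?thesis using rc Bp(2)[of "2*h-1-r" "2*h-1-c"] Cp(2)[of "2*h-1-r" "2*h-1-c"]
        by (simp add: recon_def field_simps)
    qed
  qed
  have t1: "(\<Sum>r<2*h. ?R $$ (r,r)) = 0"
  proof -
    have "(\<Sum>r<2*h. ?R $$ (r,r)) = (\<Sum>r<h. ?R $$ (r,r)) + (\<Sum>r<h. ?R $$ (2*h-1-r,2*h-1-r))"
      by (rule sum_halves)
    also have "\<dots> = (\<Sum>r<h. (B $$ (r,r) + C $$ (r,r)) / 2) + (\<Sum>r<h. (B $$ (r,r) + C $$ (r,r)) / 2)"
      by (intro arg_cong2[where f="(+)"] sum.cong refl) (auto simp: recon_def)
    also have "\<dots> = 0" using Bp(3) Cp(3) by (simp add: sum.distrib sum_divide_distrib[symmetric])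
    finally show ?thesis .
  qed
  have t2: "(\<Sum>r<2*h. ?R $$ (r,2*h-1-r)) = 0"
  proof -
    have "(\<Sum>r<2*h. ?R $$ (r,2*h-1-r)) = (\<Sum>r<h. ?R $$ (r,2*h-1-r)) + (\<Sum>r<h. ?R $$ (2*h-1-r,2*h-1-(2*h-1-r)))"
      using sum_halves[where g="\<lambda>r. ?R $$ (r,2*h-1-r)"] by simp
    also have "\<dots> = (\<Sum>r<h. (B $$ (r,r) - C $$ (r,r)) / 2) + (\<Sum>r<h. (B $$ (r,r) - C $$ (r,r)) / 2)"
      by (intro arg_cong2[where f="(+)"] sum.cong refl) (auto simp: recon_def)
    also have "\<dots> = 0" using Bp(3) Cp(3) by (simp add: sum_subtractf sum_divide_distrib[symmetric])
    finally show ?thesis .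
  qed
  show ?thesis using c fl he t1 t2 by (simp add: Kset_def)
qed

definition Fiso :: "nat \<Rightarrow> complex mat \<Rightarrow> complex mat \<times> complex mat" where
  "Fiso h A = (fs h 1 A, fs h (-1) A)"

lemma Fiso_iso: "lie_iso_su_sum (Kset (2*h)) h (Fiso h)"
  unfolding lie_iso_su_sum_def
proof (intro conjI ballI allI)
  show "bij_betw (Fiso h) (Kset (2*h)) (su h \<times> su h)"
  proof (rule bij_betw_byWitness[where f'="\<lambda>(B,C). recon h B C"])
    show "\<forall>a\<in>Kset (2*h). (\<lambda>(B,C). recon h B C) (Fiso h a) = a" by (auto simp: Fiso_def recon_fs)
    show "\<forall>a'\<in>su h \<times> su h. Fiso h ((\<lambda>(B,C). recon h B C) a') = a'"
      by (auto simp: Fiso_def fs_recon su_props(1))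
    show "Fiso h ` Kset (2*h) \<subseteq> su h \<times> su h" by (auto simp: Fiso_def fs_su)
    show "(\<lambda>(B,C). recon h B C) ` (su h \<times> su h) \<subseteq> Kset (2*h)" by (auto simp: recon_K)
  qed
next
  fix A B assume A: "A \<in> Kset (2*h)" and B: "B \<in> Kset (2*h)"
  show "Fiso h (A + B) = (fst (Fiso h A) + fst (Fiso h B), snd (Fiso h A) + snd (Fiso h B))"
    using K_props(1)[OF A] K_props(1)[OF B] by (simp add: Fiso_def fs_add)
  show "Fiso h (commutator A B) = (commutator (fst (Fiso h A)) (fst (Fiso h B)), commutator (snd (Fiso h A)) (snd (Fiso h B)))"
    using fs_comm[OF A B] by (simp add: Fiso_def)
next
  fix A c assume A: "A \<in> Kset (2*h)"
  show "Fiso h (complex_of_real c \<cdot>\<^sub>m A) = (complex_of_real c \<cdot>\<^sub>m fst (Fiso h A), complex_of_real c \<cdot>\<^sub>m snd (Fiso h A))"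
    using K_props(1)[OF A] by (simp add: Fiso_def fs_smult)
qed


inductive_set Gs :: "nat \<Rightarrow> pauli list set" for n :: nat where
  gen: "j + 1 < n \<Longrightarrow> (A, B) \<in> {(PX, PX), (PY, PY), (PY, PZ)} \<Longrightarrow> two_site n A B j \<in> Gs n"
| mul: "P \<in> Gs n \<Longrightarrow> Q \<in> Gs n \<Longrightarrow> anti P Q \<Longrightarrow> pmul P Q \<in> Gs n"

lemma Gs_len: "P \<in> Gs n \<Longrightarrow> length P = n"
  by (induction rule: Gs.induct) auto

lemma Gs_a13: "P \<in> Gs n \<Longrightarrow> \<i> \<cdot>\<^sub>m pauli_mat P \<in> a13 n"
proof (induction rule: Gs.induct)
  case (gen j A B)
  then show ?case unfolding a13_def by (intro lie_gen.gen) blast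
next
  case (mul P Q)
  have l: "length P = n" "length Q = n" using mul.hyps Gs_len by auto
  have ll: "length P = length Q" using l by simp
  define d where "d = Im (phs P Q)"
  have "phs P Q = \<i> * complex_of_real d" using phs_anti_imag[OF ll mul.hyps(3)] by (simp add: d_def)
  then have d0: "d \<noteq> 0" using phs_nz[of P Q] by auto
  have cm: "commutator (\<i> \<cdot>\<^sub>m pauli_mat P) (\<i> \<cdot>\<^sub>m pauli_mat Q) \<in> a13 n"
    using mul.IH unfolding a13_def by (rule lie_gen.bracket)
  have "complex_of_real (-1 / (2 * d)) \<cdot>\<^sub>m commutator (\<i> \<cdot>\<^sub>m pauli_mat P) (\<i> \<cdot>\<^sub>m pauli_mat Q) \<in> a13 n"
    using cm unfolding a13_def by (rule lie_gen.smult)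
  also have "complex_of_real (-1 / (2 * d)) \<cdot>\<^sub>m commutator (\<i> \<cdot>\<^sub>m pauli_mat P) (\<i> \<cdot>\<^sub>m pauli_mat Q)
      = \<i> \<cdot>\<^sub>m pauli_mat (pmul P Q)"
    unfolding commutator_pauli[OF l] using mul.hyps(3) d0 by (intro eq_matI) (auto simp: d_def)
  finally show ?case .
qed

lemma anti_append: "length P = length Q \<Longrightarrow> anti (P @ P') (Q @ Q') = (anti P Q \<noteq> anti P' Q')"
proof (induction P arbitrary: Q)
  case Nil then show ?case by simp
next
  case (Cons a P) then show ?case by (cases Q) auto
qed

lemma pmul_append: "length P = length Q \<Longrightarrow> pmul (P @ P') (Q @ Q') = pmul P Q @ pmul P' Q'"
  by (simp add: pmul_def)

lemma sg_append: "sg (P @ Q) = (sg P \<noteq> sg Q)"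
  by (induction P) auto

lemma anti_rep: "\<not> anti1 a b \<Longrightarrow> \<not> anti (replicate k a) (replicate k b)"
  by (induction k) auto

lemma pmul_rep: "pmul (replicate k a) (replicate k b) = replicate k (pm a b)"
  by (induction k) auto

lemma sg_rep_I[simp]: "\<not> sg (replicate k PI)" by (induction k) (auto simp: sg1_def)

lemma anti_rep_I[simp]: "\<not> anti P (replicate (length P) PI)"
  by (induction P) (auto simp: anti1_def)

lemma anti_rep_I'[simp]: "\<not> anti (replicate (length P) PI) P"
  by (induction P) (auto simp: anti1_def)

lemma two_site_Cons: "Suc j < n \<Longrightarrow> PI # two_site n A B j = two_site (Suc n) A B (Suc j)"
proof (rule nth_equalityI)
  fix i assume "Suc j < n" "i < length (PI # two_site n A B j)"
  then show "(PI # two_site n A B j) ! i = two_site (Suc n) A B (Suc j) ! i"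
    by (cases i) (auto simp: two_site_nth)
qed simp

lemma two_site_snoc: "Suc j < n \<Longrightarrow> two_site n A B j @ [PI] = two_site (Suc n) A B j"
proof (rule nth_equalityI)
  fix i assume "Suc j < n" "i < length (two_site n A B j @ [PI])"
  then show "(two_site n A B j @ [PI]) ! i = two_site (Suc n) A B j ! i"
    by (cases "i < n") (auto simp: two_site_nth nth_append)
qed simp

lemma Gs_Cons: "P \<in> Gs n \<Longrightarrow> PI # P \<in> Gs (Suc n)"
proof (induction rule: Gs.induct)
  case (gen j A B)
  then show ?case using Gs.gen[of "Suc j" "Suc n" A B] by (simp add: two_site_Cons)
next
  case (mul P Q)
  have "length P = length Q" using mul.hyps Gs_len by auto
  then show ?case using Gs.mul[OF mul.IH] mul.hyps(3) by (simp add: anti1_def)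
qed

lemma Gs_snoc: "P \<in> Gs n \<Longrightarrow> P @ [PI] \<in> Gs (Suc n)"
proof (induction rule: Gs.induct)
  case (gen j A B)
  then show ?case using Gs.gen[of j "Suc n" A B] by (simp add: two_site_snoc)
next
  case (mul P Q)
  have l: "length P = length Q" using mul.hyps Gs_len by auto
  then show ?case using Gs.mul[OF mul.IH] mul.hyps(3) by (simp add: anti_append pmul_append anti1_def)
qed

lemma base3: "targ 3 \<subseteq> Gs 3"
proof
  have g_XXI: "[PX,PX,PI] \<in> Gs 3" using Gs.gen[of 0 3 PX PX] by (simp add: two_site_def numeral_3_eq_3)
  have g_YYI: "[PY,PY,PI] \<in> Gs 3" using Gs.gen[of 0 3 PY PY] by (simp add: two_site_def numeral_3_eq_3)
  have g_YZI: "[PY,PZ,PI] \<in> Gs 3" using Gs.gen[of 0 3 PY PZ] by (simp add: two_site_def numeral_3_eq_3)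
  have g_IXX: "[PI,PX,PX] \<in> Gs 3" using Gs.gen[of 1 3 PX PX] by (simp add: two_site_def numeral_3_eq_3)
  have g_IYY: "[PI,PY,PY] \<in> Gs 3" using Gs.gen[of 1 3 PY PY] by (simp add: two_site_def numeral_3_eq_3)
  have g_IYZ: "[PI,PY,PZ] \<in> Gs 3" using Gs.gen[of 1 3 PY PZ] by (simp add: two_site_def numeral_3_eq_3)
  have g_XZY: "[PX,PZ,PY] \<in> Gs 3" using Gs.mul[OF g_XXI g_IYY] by (simp add: pmul_def anti1_def)
  have g_XZZ: "[PX,PZ,PZ] \<in> Gs 3" using Gs.mul[OF g_XXI g_IYZ] by (simp add: pmul_def anti1_def)
  have g_IXI: "[PI,PX,PI] \<in> Gs 3" using Gs.mul[OF g_YYI g_YZI] by (simp add: pmul_def anti1_def)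
  have g_YZX: "[PY,PZ,PX] \<in> Gs 3" using Gs.mul[OF g_YYI g_IXX] by (simp add: pmul_def anti1_def)
  have g_YYX: "[PY,PY,PX] \<in> Gs 3" using Gs.mul[OF g_YZI g_IXX] by (simp add: pmul_def anti1_def)
  have g_YXY: "[PY,PX,PY] \<in> Gs 3" using Gs.mul[OF g_YZI g_IYY] by (simp add: pmul_def anti1_def)
  have g_YXZ: "[PY,PX,PZ] \<in> Gs 3" using Gs.mul[OF g_YZI g_IYZ] by (simp add: pmul_def anti1_def)
  have g_ZIY: "[PZ,PI,PY] \<in> Gs 3" using Gs.mul[OF g_YZI g_XZY] by (simp add: pmul_def anti1_def)
  have g_ZIZ: "[PZ,PI,PZ] \<in> Gs 3" using Gs.mul[OF g_YZI g_XZZ] by (simp add: pmul_def anti1_def)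
  have g_YIZ: "[PY,PI,PZ] \<in> Gs 3" using Gs.mul[OF g_IXX g_YXY] by (simp add: pmul_def anti1_def)
  have g_YIY: "[PY,PI,PY] \<in> Gs 3" using Gs.mul[OF g_IXX g_YXZ] by (simp add: pmul_def anti1_def)
  have g_ZXZ: "[PZ,PX,PZ] \<in> Gs 3" using Gs.mul[OF g_IXX g_ZIY] by (simp add: pmul_def anti1_def)
  have g_ZXY: "[PZ,PX,PY] \<in> Gs 3" using Gs.mul[OF g_IXX g_ZIZ] by (simp add: pmul_def anti1_def)
  have g_IIX: "[PI,PI,PX] \<in> Gs 3" using Gs.mul[OF g_IYY g_IYZ] by (simp add: pmul_def anti1_def)
  have g_IZY: "[PI,PZ,PY] \<in> Gs 3" using Gs.mul[OF g_IYY g_IXI] by (simp add: pmul_def anti1_def)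
  have g_ZYX: "[PZ,PY,PX] \<in> Gs 3" using Gs.mul[OF g_IYY g_ZIZ] by (simp add: pmul_def anti1_def)
  have g_ZZI: "[PZ,PZ,PI] \<in> Gs 3" using Gs.mul[OF g_IYY g_ZXY] by (simp add: pmul_def anti1_def)
  have g_IZZ: "[PI,PZ,PZ] \<in> Gs 3" using Gs.mul[OF g_IYZ g_IXI] by (simp add: pmul_def anti1_def)
  have g_XYY: "[PX,PY,PY] \<in> Gs 3" using Gs.mul[OF g_XXI g_IZY] by (simp add: pmul_def anti1_def)
  have g_XYZ: "[PX,PY,PZ] \<in> Gs 3" using Gs.mul[OF g_XXI g_IZZ] by (simp add: pmul_def anti1_def)
  have g_XIX: "[PX,PI,PX] \<in> Gs 3" using Gs.mul[OF g_YYI g_ZYX] by (simp add: pmul_def anti1_def)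
  have g_XII: "[PX,PI,PI] \<in> Gs 3" using Gs.mul[OF g_YZI g_ZZI] by (simp add: pmul_def anti1_def)
  have g_ZZX: "[PZ,PZ,PX] \<in> Gs 3" using Gs.mul[OF g_YZI g_XIX] by (simp add: pmul_def anti1_def)
  have g_ZYI: "[PZ,PY,PI] \<in> Gs 3" using Gs.mul[OF g_IXX g_ZZX] by (simp add: pmul_def anti1_def)
  note all = g_XXI g_YYI g_YZI g_IXX g_IYY g_IYZ g_XZY g_XZZ g_IXI g_YZX g_YYX g_YXY g_YXZ g_ZIY g_ZIZ g_YIZ g_YIY g_ZXZ g_ZXY g_IIX g_IZY g_ZYX g_ZZI g_IZZ g_XYY g_XYZ g_XIX g_XII g_ZZX g_ZYI
  fix P assume P: "P \<in> targ 3"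
  then have l: "length P = 3" and s: "\<not> sg P" and ne: "P \<noteq> [PI,PI,PI]" "P \<noteq> [PX,PX,PX]"
    by (auto simp: targ_iff numeral_3_eq_3)
  obtain a b c where abc: "P = [a,b,c]" using l by (auto simp: numeral_3_eq_3 length_Suc_conv)
  show "P \<in> Gs 3" using s ne all unfolding abc
    by (cases a; cases b; cases c) (simp_all add: sg1_def)
qed


lemma anti_rep_X_I[simp]: "\<not> anti (replicate k PX) (replicate k PI)"
  by (induction k) (auto simp: anti1_def)

lemmas [simp] = anti_self

lemma ex_gamma:
  "M \<noteq> replicate (length M) PI \<Longrightarrow> (M = replicate (length M) PX \<longrightarrow> b) \<Longrightarrow>
   \<exists>\<gamma>. length \<gamma> = length M \<and> anti M \<gamma> \<and> sg \<gamma> = b"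
proof (induction M arbitrary: b)
  case Nil then show ?case by simp
next
  case (Cons c M)
  show ?case
  proof (cases "M \<noteq> replicate (length M) PI \<and> (M = replicate (length M) PX \<longrightarrow> b)")
    case True
    then obtain g where g: "length g = length M" "anti M g" "sg g = b" using Cons.IH by blast
    show ?thesis by (rule exI[of _ "PI # g"]) (use g in \<open>simp add: anti1_def sg1_def\<close>)
  next
    case False
    show ?thesis
    proof (cases "M = replicate (length M) PI")
      case MI: True
      have c: "c \<noteq> PI" using Cons.prems(1) MI by auto
      define k0 where "k0 = length M"
      have MI': "M = replicate k0 PI" using MI by (simp add: k0_def)
      show ?thesis
      proof (cases c)
        case PI then show ?thesis using c by simp
      next
        case PX
        show ?thesis
        proof (cases b)
          case True
          show ?thesis by (rule exI[of _ "PY # replicate k0 PI"]) (use MI' PX True in \<open>simp add: anti1_def sg1_def\<close>)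
        next
          case bF: False
          have "M \<noteq> []" using Cons.prems(2) PX bF MI by auto
          then obtain k where k: "k0 = Suc k" using MI' by (cases k0) auto
          show ?thesis
            by (rule exI[of _ "PY # PY # replicate k PI"]) (use MI' PX bF k in \<open>simp add: anti1_def sg1_def\<close>)
        qed
      next
        case PY
        show ?thesis by (rule exI[of _ "(if b then PZ else PX) # replicate k0 PI"])
          (use MI' PY in \<open>simp add: anti1_def sg1_def\<close>)
      next
        case PZ
        show ?thesis by (rule exI[of _ "(if b then PY else PX) # replicate k0 PI"])
          (use MI' PZ in \<open>simp add: anti1_def sg1_def\<close>)
      qed
    next
      case MnI: False
      then have MX0: "M = replicate (length M) PX" and bF: "\<not> b" using False by auto
      define k0 where "k0 = length M"
      have MX: "M = replicate k0 PX" using MX0 by (simp add: k0_def)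
      have "M \<noteq> []" using MnI by auto
      then obtain k where k: "k0 = Suc k" using MX by (cases k0) auto
      have cX: "c \<noteq> PX" using Cons.prems(2) MX bF by auto
      show ?thesis
      proof (cases "c = PI")
        case True
        show ?thesis
          by (rule exI[of _ "PY # PZ # replicate k PI"]) (use MX True bF k in \<open>simp add: anti1_def sg1_def\<close>)
      next
        case False
        then have "c = PY \<or> c = PZ" using cX by (cases c) auto
        then show ?thesis
          by (intro exI[of _ "PX # replicate k0 PI"]) (use MX bF in \<open>auto simp: anti1_def sg1_def\<close>)
      qed
    qed
  qed
qed

lemma sg_rep_X[simp]: "\<not> sg (replicate k PX)" by (induction k) (auto simp: sg1_def)

lemma anti_rep_gen: "anti (replicate k a) (replicate k b) = (odd k \<and> anti1 a b)"
  by (induction k) auto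

lemma XnR:
  assumes padL: "\<And>Q. length Q = k+3 \<Longrightarrow> \<not> sg Q \<Longrightarrow> Q \<noteq> replicate (k+3) PI \<Longrightarrow> Q \<noteq> replicate (k+3) PX \<Longrightarrow> PI # Q \<in> Gs (Suc (k+3))"
    and padR: "\<And>Q. length Q = k+3 \<Longrightarrow> \<not> sg Q \<Longrightarrow> Q \<noteq> replicate (k+3) PI \<Longrightarrow> Q \<noteq> replicate (k+3) PX \<Longrightarrow> Q @ [PI] \<in> Gs (Suc (k+3))"
  shows "replicate (k+3) PX @ [PI] \<in> Gs (Suc (k+3))"
proof -
  have A2: "([PX,PY,PZ] @ replicate k PX) @ [PI] \<in> Gs (Suc (k+3))"
    by (rule padR) (auto simp: sg1_def dest: arg_cong[where f=set])
  have B2: "PI # ([PI,PY] @ replicate k PI @ [PZ]) \<in> Gs (Suc (k+3))"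
    by (rule padL) (auto simp: sg1_def sg_append dest: arg_cong[where f=set])
  have B1: "[PX,PY] @ replicate (Suc k) PX @ [PZ] \<in> Gs (Suc (k+3))"
    using Gs.mul[OF A2 B2] by (simp add: anti_append pmul_append pmul_rep anti_rep_gen anti1_def)
  have A1: "PI # ([PZ] @ replicate (Suc k) PI @ [PZ]) \<in> Gs (Suc (k+3))"
    by (rule padL) (auto simp: sg1_def sg_append dest: arg_cong[where f=set])
  show ?thesis
    using Gs.mul[OF A1 B1] by (simp add: anti_append pmul_append pmul_rep anti_rep_gen anti1_def numeral_3_eq_3)
qed

lemma rep3: "replicate k x @ [x,x,x] = replicate (k+3) x"
  by (simp only: replicate_add) (simp add: numeral_3_eq_3)

lemma XnL:
  assumes padL: "\<And>Q. length Q = k+3 \<Longrightarrow> \<not> sg Q \<Longrightarrow> Q \<noteq> replicate (k+3) PI \<Longrightarrow> Q \<noteq> replicate (k+3) PX \<Longrightarrow> PI # Q \<in> Gs (Suc (k+3))"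
    and padR: "\<And>Q. length Q = k+3 \<Longrightarrow> \<not> sg Q \<Longrightarrow> Q \<noteq> replicate (k+3) PI \<Longrightarrow> Q \<noteq> replicate (k+3) PX \<Longrightarrow> Q @ [PI] \<in> Gs (Suc (k+3))"
  shows "PI # replicate (k+3) PX \<in> Gs (Suc (k+3))"
proof -
  have A2: "PI # (replicate k PX @ [PZ,PY,PX]) \<in> Gs (Suc (k+3))"
    by (rule padL) (auto simp: sg1_def sg_append dest: arg_cong[where f=set])
  have B2: "([PZ] @ replicate k PI @ [PY,PI]) @ [PI] \<in> Gs (Suc (k+3))"
    by (rule padR) (auto simp: sg1_def sg_append dest: arg_cong[where f=set])
  have B1: "[PZ] @ replicate k PX @ [PX,PY,PX] \<in> Gs (Suc (k+3))"
    using Gs.mul[OF A2 B2] by (simp add: anti_append pmul_append pmul_rep anti_rep_gen anti1_def)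
  have A1: "([PZ] @ replicate k PI @ [PI,PZ]) @ [PI] \<in> Gs (Suc (k+3))"
    by (rule padR) (auto simp: sg1_def sg_append dest: arg_cong[where f=set])
  have an: "anti (([PZ] @ replicate k PI @ [PI,PZ]) @ [PI]) ([PZ] @ replicate k PX @ [PX,PY,PX])"
    by (simp add: anti_append anti_rep_gen anti1_def)
  have pm: "pmul (([PZ] @ replicate k PI @ [PI,PZ]) @ [PI]) ([PZ] @ replicate k PX @ [PX,PY,PX]) = PI # replicate (k+3) PX"
    by (simp add: pmul_append pmul_rep rep3)
  show ?thesis using Gs.mul[OF A1 B1 an] unfolding pm .
qed

lemma pm_I2[simp]: "pm a PI = a" by (cases a) auto
lemma pm_self[simp]: "pm a a = PI" by (cases a) auto

lemma pmul_pmul_cancel: "length M = length g \<Longrightarrow> pmul (pmul M g) g = M"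
  by (metis pmul_comm pmul_cancel length_pmul min.idem)

lemma stepB:
  assumes padL: "\<And>Q. length Q = n \<Longrightarrow> \<not> sg Q \<Longrightarrow> Q \<noteq> replicate n PI \<Longrightarrow> PI # Q \<in> Gs (Suc n)"
    and padR: "\<And>Q. length Q = n \<Longrightarrow> \<not> sg Q \<Longrightarrow> Q \<noteq> replicate n PI \<Longrightarrow> Q @ [PI] \<in> Gs (Suc n)"
    and r: "\<rho> \<noteq> PI" and s: "\<sigma> \<noteq> PI" and l: "Suc (length M) = n"
    and MI: "M \<noteq> replicate (length M) PI" and MX: "M = replicate (length M) PX \<longrightarrow> sg1 \<sigma>"
    and sgR: "\<not> sg (\<rho> # M @ [\<sigma>])"
  shows "\<rho> # M @ [\<sigma>] \<in> Gs (Suc n)"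
proof -
  obtain g where g: "length g = length M" "anti M g" "sg g = sg1 \<sigma>" using ex_gamma[OF MI MX] by blast
  have sR: "(sg1 \<rho> \<noteq> (sg M \<noteq> sg1 \<sigma>)) = False" using sgR by (simp add: sg_append)
  have A: "(\<rho> # pmul M g) @ [PI] \<in> Gs (Suc n)"
  proof (rule padR)
    show "length (\<rho> # pmul M g) = n" using l g by simp
    show "\<not> sg (\<rho> # pmul M g)" using sR g by (simp add: sg_pmul)
    show "\<rho> # pmul M g \<noteq> replicate n PI" using r l by (cases n) auto
  qed
  have B: "PI # (g @ [\<sigma>]) \<in> Gs (Suc n)"
  proof (rule padL)
    show "length (g @ [\<sigma>]) = n" using l g by simp
    show "\<not> sg (g @ [\<sigma>])" using g by (simp add: sg_append)
    show "g @ [\<sigma>] \<noteq> replicate n PI"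
    proof
      assume e: "g @ [\<sigma>] = replicate n PI"
      have "\<sigma> \<in> set (g @ [\<sigma>])" by simp
      then have "\<sigma> \<in> set (replicate n PI)" unfolding e .
      then show False using s by simp
    qed
  qed
  have an: "anti ((\<rho> # pmul M g) @ [PI]) (PI # (g @ [\<sigma>]))"
  proof -
    have "anti ((\<rho> # pmul M g) @ [PI]) (PI # (g @ [\<sigma>])) = anti (pmul M g @ [PI]) (g @ [\<sigma>])"
      by (simp add: anti1_def)
    also have "\<dots> = anti (pmul M g) g" using g by (simp add: anti_append anti1_def)
    also have "\<dots> = anti g (pmul M g)" by (rule anti_sym)
    also have "\<dots> = anti M g" using g anti_pmul[of M g g] by (simp add: anti_sym)
    finally show ?thesis using g by simp
  qed
  have pm: "pmul ((\<rho> # pmul M g) @ [PI]) (PI # (g @ [\<sigma>])) = \<rho> # M @ [\<sigma>]"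
  proof -
    have "pmul ((\<rho> # pmul M g) @ [PI]) (PI # (g @ [\<sigma>])) = \<rho> # pmul (pmul M g @ [PI]) (g @ [\<sigma>])"
      by simp
    also have "pmul (pmul M g @ [PI]) (g @ [\<sigma>]) = pmul (pmul M g) g @ [\<sigma>]"
      using g by (simp add: pmul_append)
    finally show ?thesis using pmul_pmul_cancel[OF g(1)[symmetric]] by simp
  qed
  show ?thesis using Gs.mul[OF A B an] unfolding pm .
qed

lemma stepC:
  assumes padL: "\<And>Q. length Q = n \<Longrightarrow> \<not> sg Q \<Longrightarrow> Q \<noteq> replicate n PI \<Longrightarrow> PI # Q \<in> Gs (Suc n)"
    and padR: "\<And>Q. length Q = n \<Longrightarrow> \<not> sg Q \<Longrightarrow> Q \<noteq> replicate n PI \<Longrightarrow> Q @ [PI] \<in> Gs (Suc n)"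
    and r: "\<rho> \<noteq> PI" and s: "\<sigma> \<noteq> PI" and l: "n = Suc (Suc k)" and k0: "0 < k"
    and sgR: "\<not> sg (\<rho> # replicate (Suc k) PI @ [\<sigma>])"
  shows "\<rho> # replicate (Suc k) PI @ [\<sigma>] \<in> Gs (Suc n)"
proof -
  define t where "t = (if \<sigma> = PX then PZ else PX)"
  define la where "la = (if sg1 \<rho> \<noteq> sg1 t then PY else PX)"
  have ta: "anti1 t \<sigma>" using s by (cases \<sigma>) (auto simp: t_def anti1_def)
  have tI: "t \<noteq> PI" by (simp add: t_def)
  have laI: "la \<noteq> PI" by (simp add: la_def)
  have sla: "sg1 la = (sg1 \<rho> \<noteq> sg1 t)" by (simp add: la_def sg1_def)
  have srs: "sg1 \<rho> = sg1 \<sigma>" using sgR by (simp add: sg_append sg1_def)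
  have A: "\<rho> # (la # replicate k PI) @ [t] \<in> Gs (Suc n)"
  proof (rule stepB[OF padL padR r tI])
    show "Suc (length (la # replicate k PI)) = n" using l by simp
    show "la # replicate k PI \<noteq> replicate (length (la # replicate k PI)) PI" using laI by simp
    show "la # replicate k PI = replicate (length (la # replicate k PI)) PX \<longrightarrow> sg1 t"
      using l sla k0 by (cases k) (auto simp: la_def sg1_def t_def)
    show "\<not> sg (\<rho> # (la # replicate k PI) @ [t])" using sla by (cases "sg1 \<rho>"; cases "sg1 t") (simp_all add: sg_append)
  qed
  have sgpm: "sg1 (pm t \<sigma>) = (sg1 t \<noteq> sg1 \<sigma>)" by (cases t; cases \<sigma>) (auto simp: sg1_def)
  have B: "PI # ((la # replicate k PI) @ [pm t \<sigma>]) \<in> Gs (Suc n)"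
  proof (rule padL)
    show "length ((la # replicate k PI) @ [pm t \<sigma>]) = n" using l by simp
    show "\<not> sg ((la # replicate k PI) @ [pm t \<sigma>])" using sla sgpm srs by (cases "sg1 \<sigma>"; cases "sg1 t") (simp_all add: sg_append)
    show "(la # replicate k PI) @ [pm t \<sigma>] \<noteq> replicate n PI" using laI l by simp
  qed
  have an: "anti (\<rho> # (la # replicate k PI) @ [t]) (PI # ((la # replicate k PI) @ [pm t \<sigma>]))"
    using ta by (simp add: anti_append anti1_def) (cases t; cases \<sigma>; simp)
  have pm: "pmul (\<rho> # (la # replicate k PI) @ [t]) (PI # ((la # replicate k PI) @ [pm t \<sigma>])) =
      \<rho> # replicate (Suc k) PI @ [\<sigma>]"
    by (simp add: pmul_append pmul_rep pm_cancel pmul_self)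
  show ?thesis using Gs.mul[OF A B an] unfolding pm .
qed

lemma ind_step:
  assumes n: "n \<ge> 3" and IH: "targ n \<subseteq> Gs n"
  shows "targ (Suc n) \<subseteq> Gs (Suc n)"
proof
  obtain k where k: "n = k + 3" using n by (metis add.commute le_iff_add)
  have padL0: "PI # Q \<in> Gs (Suc n)" if "length Q = n" "\<not> sg Q" "Q \<noteq> replicate n PI" "Q \<noteq> replicate n PX" for Q
    using that IH Gs_Cons by (auto simp: targ_iff)
  have padR0: "Q @ [PI] \<in> Gs (Suc n)" if "length Q = n" "\<not> sg Q" "Q \<noteq> replicate n PI" "Q \<noteq> replicate n PX" for Q
    using that IH Gs_snoc by (auto simp: targ_iff)
  have XL: "PI # replicate n PX \<in> Gs (Suc n)" using XnL[of k] padL0 padR0 k by simp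
  have XR: "replicate n PX @ [PI] \<in> Gs (Suc n)" using XnR[of k] padL0 padR0 k by simp
  have padL: "PI # Q \<in> Gs (Suc n)" if "length Q = n" "\<not> sg Q" "Q \<noteq> replicate n PI" for Q
    using padL0[OF that] XL by (cases "Q = replicate n PX") auto
  have padR: "Q @ [PI] \<in> Gs (Suc n)" if "length Q = n" "\<not> sg Q" "Q \<noteq> replicate n PI" for Q
    using padR0[OF that] XR by (cases "Q = replicate n PX") auto
  fix R assume R: "R \<in> targ (Suc n)"
  then have lR: "length R = Suc n" and sR: "\<not> sg R" and RI: "R \<noteq> replicate (Suc n) PI"
    and RX: "R \<noteq> replicate (Suc n) PX" by (auto simp: targ_iff)
  obtain \<rho> R' where R1: "R = \<rho> # R'" using lR by (cases R) auto
  show "R \<in> Gs (Suc n)"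
  proof (cases "\<rho> = PI")
    case True
    then show ?thesis using padL[of R'] lR sR RI R1 by (simp add: sg1_def)
  next
    case rI: False
    have "R' \<noteq> []" using lR R1 n by auto
    then obtain M \<sigma> where R2: "R' = M @ [\<sigma>]" by (cases R' rule: rev_exhaust) auto
    have lM: "Suc (length M) = n" using lR R1 R2 by simp
    show ?thesis
    proof (cases "\<sigma> = PI")
      case True
      have "R = (\<rho> # M) @ [PI]" using R1 R2 True by simp
      moreover have "\<rho> # M \<noteq> replicate n PI" using rI lM by (cases n) auto
      ultimately show ?thesis using padR[of "\<rho> # M"] lM sR rI R1 R2 True by (simp add: sg_append sg1_def)
    next
      case sI: False
      show ?thesis
      proof (cases "M = replicate (length M) PI")
        case True
        obtain j where j: "length M = Suc j" "0 < j" using lM n by (cases "length M") auto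
        have "R = \<rho> # replicate (Suc j) PI @ [\<sigma>]" using R1 R2 True j by (metis)
        moreover have "n = Suc (Suc j)" using lM j by simp
        ultimately show ?thesis using stepC[OF padL padR rI sI _ j(2)] sR by simp
      next
        case MI: False
        have MX: "M = replicate (length M) PX \<longrightarrow> sg1 \<sigma>"
        proof
          assume MX: "M = replicate (length M) PX"
          show "sg1 \<sigma>"
          proof (rule ccontr)
            assume ns: "\<not> sg1 \<sigma>"
            have sgM: "\<not> sg M" by (subst MX) simp
            have "\<not> sg1 \<rho>" using sR ns sgM R1 R2 by (simp add: sg_append)
            then have "\<rho> = PX" using rI by (cases \<rho>) (simp_all add: sg1_def)
            moreover have "\<sigma> = PX" using sI ns by (cases \<sigma>) (simp_all add: sg1_def)
            ultimately have "R = replicate (Suc n) PX" using R1 R2 MX lM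
              by (metis replicate_Suc replicate_append_same)
            then show False using RX by simp
          qed
        qed
        show ?thesis using stepB[OF padL padR rI sI lM MI MX] sR R1 R2 by simp
      qed
    qed
  qed
qed

lemma targ_Gs: "n \<ge> 3 \<Longrightarrow> targ n \<subseteq> Gs n"
proof (induction n rule: dec_induct)
  case base then show ?case by (rule base3)
next
  case (step m) then show ?case by (intro ind_step) auto
qed

lemma SP_sub_a13: assumes "n \<ge> 3" shows "SP n \<subseteq> a13 n"
proof
  fix A assume "A \<in> SP n"
  then show "A \<in> a13 n"
  proof (induction rule: real_span_mat.induct)
    case zero then show ?case unfolding a13_def by (rule lie_gen.zero)
  next
    case (gen A)
    then obtain P where "P \<in> targ n" "A = \<i> \<cdot>\<^sub>m pauli_mat P" by blast
    then show ?case using targ_Gs[OF assms] Gs_a13 by auto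
  next
    case (add A B) show ?case using add.IH unfolding a13_def by (rule lie_gen.add)
  next
    case (smult A c) show ?case using smult.IH unfolding a13_def by (rule lie_gen.smult)
  qed
qed

theorem mainTheorem16:
  fixes n :: nat
  assumes "n \<ge> 3"
  shows "a13 n = real_span_mat (2 ^ n)
           ((\<lambda>P. \<i> \<cdot>\<^sub>m pauli_mat P) `
             {P. length P = n \<and> P \<noteq> replicate n PI \<and> P \<noteq> replicate n PX \<and>
                 pauli_mat P * pauli_mat (replicate n PX) =
                 pauli_mat (replicate n PX) * pauli_mat P})
       \<and> (\<exists>f. lie_iso_su_sum (a13 n) (2 ^ (n - 1)) f)"
proof
  have eqS: "a13 n = SP n" using a13_sub_SP[OF assms] SP_sub_a13[OF assms] by blast
  then show "a13 n = real_span_mat (2 ^ n)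
           ((\<lambda>P. \<i> \<cdot>\<^sub>m pauli_mat P) `
             {P. length P = n \<and> P \<noteq> replicate n PI \<and> P \<noteq> replicate n PX \<and>
                 pauli_mat P * pauli_mat (replicate n PX) =
                 pauli_mat (replicate n PX) * pauli_mat P})"
    by (simp add: targ_def)
  have eqK: "a13 n = Kset (2 * 2^(n-1))"
  proof -
    have "(2::nat) ^ n = 2 * 2^(n-1)" using assms by (cases n) auto
    then show ?thesis using eqS SP_sub_K[of n] K_sub_SP[of n] by auto
  qed
  show "\<exists>f. lie_iso_su_sum (a13 n) (2 ^ (n - 1)) f"
    unfolding eqK using Fiso_iso by blast
qed


end
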